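(* Let $\mathsf{L}\in\{\mathsf{CN4K},\mathsf{CN4K}^\pm,\mathsf{CN4K}^\curlyvee,\mathsf{CN4K}^{\Join},\mathsf{CN4K}^1\}$, $\Gamma$ a finite multiset of formulas and $\phi$ a formula. If $\mathsf{L}\models\bigwedge_{\psi\in\Gamma}\psi\to\phi$ (for $\Gamma$ empty: $\mathsf{L}\models\phi$), then the sequent $\Gamma\Rightarrow\phi$ is provable in $\mathcal{G}\mathsf{L}$.
   Context: Fix a countable set $\mathsf{Prop}$ of propositional variables. The language $\mathcal{L}$ is given by the grammar $\phi::=p\mid{\sim}\phi\mid(\phi\wedge\phi)\mid(\phi\vee\phi)\mid(\phi\to\phi)\mid\Box\phi\mid\Diamond\phi$ with $p\in\mathsf{Prop}$. Semantics. A $\mathsf{CN4K}$ frame is $\langle W,\le,R^+_\Box,R^-_\Box,R^+_\Diamond,R^-_\Diamond\rangle$ with $W\ne\varnothing$, $\le$ a preorder on $W$, and four arbitrary binary relations; $R(w)=\{w'\mid wRw'\}$. It is $\pm$-birelational if $R^+_\Box=R^+_\Diamond$ and $R^-_\Box=R^-_\Diamond$; $\curlyvee$-birelational if $R^+_\Box=R^-_\Box$ and $R^+_\Diamond=R^-_\Diamond$; $\Join$-birelational if $R^+_\Box=R^-_\Diamond$ and $R^+_\Diamond=R^-_\Box$; monorelational if all four coincide. A model adds $v^+,v^-:\mathsf{Prop}\to2^W$ upward closed under $\le$. Support: $w\Vdash^\pm p$ iff $w\in v^\pm(p)$; $w\Vdash^+{\sim}\phi$ iff $w\Vdash^-\phi$;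 $w\Vdash^-{\sim}\phi$ iff $w\Vdash^+\phi$; $w\Vdash^+\phi\wedge\chi$ iff both; $w\Vdash^-\phi\wedge\chi$ iff $w\Vdash^-\phi$ or $w\Vdash^-\chi$; $w\Vdash^+\phi\vee\chi$ iff $w\Vdash^+\phi$ or $w\Vdash^+\chi$; $w\Vdash^-\phi\vee\chi$ iff both negatively supported; $w\Vdash^+\phi\to\chi$ iff for all $w'\ge w$, $w'\Vdash^+\phi$ implies $w'\Vdash^+\chi$; $w\Vdash^-\phi\to\chi$ iff $w\Vdash^+\phi$ and $w\Vdash^-\chi$; $w\Vdash^+\Box\phi$ iff $\forall w'\ge w\ \forall w''\in R^+_\Box(w')$: $w''\Vdash^+\phi$; $w\Vdash^-\Box\phi$ iff $\forall w'\ge w\ \exists w''\in R^-_\Box(w')$: $w''\Vdash^-\phi$; $w\Vdash^+\Diamond\phi$ iff $\forall w'\ge w\ \exists w''\in R^+_\Diamond(w')$: $w''\Vdash^+\phi$; $w\Vdash^-\Diamond\phi$ iff $\forall w'\ge w\ \forall w''\in R^-_\Diamond(w')$: $w''\Vdash^-\phi$. $\mathsf{CN4K}$, $\mathsf{CN4K}^\pm$, $\mathsf{CN4K}^\curlyvee$, $\mathsf{CN4K}^{\Join}$, $\mathsf{CN4K}^1$ are the logics of all frames, $\pm$-, $\curlyvee$-, $\Join$-birelational, and monorelational frames, resp.; $\mathsf{L}\models\chi$ means $\mathfrak{M},w\Vdash^+\chi$ for every model $\mathfrak{M}$ on a frame of the class of $\mathsf{L}$ and every state $w$. Sequents. A sequent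 is $\Gamma\Rightarrow\phi$ with $\Gamma$ a finite multiset of formulas and $\phi$ a single formula. $\Gamma^\Box=\{\phi\mid\Box\phi\in\Gamma\}$, $\Gamma^\Diamond_\sim=\{{\sim}\phi\mid{\sim}\Diamond\phi\in\Gamma\}$ (multisets). Rules are written premise(s) / conclusion. Rules of $\mathcal{G}\mathsf{N4}$: axioms $p,\Gamma\Rightarrow p$ and ${\sim}p,\Gamma\Rightarrow{\sim}p$ ($p\in\mathsf{Prop}$); ${\sim}{\sim}_l$: $\phi,\Gamma\Rightarrow\psi$ / ${\sim}{\sim}\phi,\Gamma\Rightarrow\psi$; ${\sim}{\sim}_r$: $\Gamma\Rightarrow\phi$ / $\Gamma\Rightarrow{\sim}{\sim}\phi$; $\wedge_l$: $\phi,\chi,\Gamma\Rightarrow\psi$ / $\phi\wedge\chi,\Gamma\Rightarrow\psi$; $\wedge_r$: $\Gamma\Rightarrow\phi$ and $\Gamma\Rightarrow\chi$ / $\Gamma\Rightarrow\phi\wedge\chi$; $\vee_l$: $\phi,\Gamma\Rightarrow\psi$ and $\chi,\Gamma\Rightarrow\psi$ / $\phi\vee\chi,\Gamma\Rightarrow\psi$; $\vee_{r_1}$: $\Gamma\Rightarrow\phi$ / $\Gamma\Rightarrow\phi\vee\chi$; $\vee_{r_2}$: $\Gamma\Rightarrow\chi$ / $\Gamma\Rightarrow\phi\vee\chi$; ${\sim}\vee_l$: ${\sim}\phi,{\sim}\chi,\Gamma\Rightarrow\psi$ / ${\sim}(\phi\vee\chi),\Gamma\Rightarrow\psi$; ${\sim}\vee_r$: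 $\Gamma\Rightarrow{\sim}\phi$ and $\Gamma\Rightarrow{\sim}\chi$ / $\Gamma\Rightarrow{\sim}(\phi\vee\chi)$; ${\sim}\wedge_l$: ${\sim}\phi,\Gamma\Rightarrow\psi$ and ${\sim}\chi,\Gamma\Rightarrow\psi$ / ${\sim}(\phi\wedge\chi),\Gamma\Rightarrow\psi$; ${\sim}\wedge_{r_1}$: $\Gamma\Rightarrow{\sim}\phi$ / $\Gamma\Rightarrow{\sim}(\phi\wedge\chi)$; ${\sim}\wedge_{r_2}$: $\Gamma\Rightarrow{\sim}\chi$ / $\Gamma\Rightarrow{\sim}(\phi\wedge\chi)$; $\to_l$: $\phi\to\chi,\Gamma\Rightarrow\phi$ and $\chi,\Gamma\Rightarrow\psi$ / $\phi\to\chi,\Gamma\Rightarrow\psi$; $\to_r$: $\Gamma,\phi\Rightarrow\chi$ / $\Gamma\Rightarrow\phi\to\chi$; ${\sim}\!\to_l$: $\phi,{\sim}\chi,\Gamma\Rightarrow\psi$ / ${\sim}(\phi\to\chi),\Gamma\Rightarrow\psi$; ${\sim}\!\to_r$: $\Gamma\Rightarrow\phi$ and $\Gamma\Rightarrow{\sim}\chi$ / $\Gamma\Rightarrow{\sim}(\phi\to\chi)$. Modal rules: $\Box$: $\Gamma^\Box\Rightarrow\chi$ / $\Gamma\Rightarrow\Box\chi$; $\Diamond$: $\phi\Rightarrow\chi$ / $\Gamma,\Diamond\phi\Rightarrow\Diamond\chi$; $\Box_\sim$: ${\sim}\phi\Rightarrow{\sim}\chi$ / $\Gamma,{\sim}\Box\phi\Rightarrow{\sim}\Box\chi$;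 $\Diamond_\sim$: $\Gamma^\Diamond_\sim\Rightarrow{\sim}\chi$ / $\Gamma\Rightarrow{\sim}\Diamond\chi$; $\Diamond^\pm$: $\Gamma^\Box,\phi\Rightarrow\chi$ / $\Gamma,\Diamond\phi\Rightarrow\Diamond\chi$; $\Box^\pm_\sim$: $\Gamma^\Diamond_\sim,{\sim}\phi\Rightarrow{\sim}\chi$ / $\Gamma,{\sim}\Box\phi\Rightarrow{\sim}\Box\chi$; $\Diamond^\curlyvee$: $\Gamma^\Diamond_\sim,\phi\Rightarrow\chi$ / $\Gamma,\Diamond\phi\Rightarrow\Diamond\chi$; $\Box^\curlyvee_\sim$: $\Gamma^\Box,{\sim}\phi\Rightarrow{\sim}\chi$ / $\Gamma,{\sim}\Box\phi\Rightarrow{\sim}\Box\chi$; $\Box^{\Join}$: $\Gamma^\Box,\Gamma^\Diamond_\sim\Rightarrow\chi$ / $\Gamma\Rightarrow\Box\chi$; $\Diamond^{\Join}$: ${\sim}\phi\Rightarrow\chi$ / $\Gamma,{\sim}\Box\phi\Rightarrow\Diamond\chi$; $\Box^{\Join}_\sim$: $\phi\Rightarrow{\sim}\chi$ / $\Gamma,\Diamond\phi\Rightarrow{\sim}\Box\chi$; $\Diamond^{\Join}_\sim$: $\Gamma^\Box,\Gamma^\Diamond_\sim\Rightarrow{\sim}\chi$ / $\Gamma\Rightarrow{\sim}\Diamond\chi$; $\Diamond^1$: $\Gamma^\Box,\Gamma^\Diamond_\sim,\phi\Rightarrow\chi$ / $\Gamma,\Diamond\phi\Rightarrow\Diamond\chi$;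 $\Box^1_\sim$: $\Gamma^\Box,\Gamma^\Diamond_\sim,{\sim}\phi\Rightarrow{\sim}\chi$ / $\Gamma,{\sim}\Box\phi\Rightarrow{\sim}\Box\chi$; $\Diamond^{1,\Join}$: $\Gamma^\Box,\Gamma^\Diamond_\sim,{\sim}\phi\Rightarrow\chi$ / $\Gamma,{\sim}\Box\phi\Rightarrow\Diamond\chi$; $\Box^{1,\Join}_\sim$: $\Gamma^\Box,\Gamma^\Diamond_\sim,\phi\Rightarrow{\sim}\chi$ / $\Gamma,\Diamond\phi\Rightarrow{\sim}\Box\chi$. Calculi: $\mathcal{G}\mathsf{CN4K}=\mathcal{G}\mathsf{N4}+\{\Box,\Diamond,\Box_\sim,\Diamond_\sim\}$; $\mathcal{G}\mathsf{CN4K}^\curlyvee=\mathcal{G}\mathsf{N4}+\{\Box,\Diamond^\curlyvee,\Box^\curlyvee_\sim,\Diamond_\sim\}$; $\mathcal{G}\mathsf{CN4K}^\pm=\mathcal{G}\mathsf{N4}+\{\Box,\Diamond^\pm,\Box^\pm_\sim,\Diamond_\sim\}$; $\mathcal{G}\mathsf{CN4K}^{\Join}=\mathcal{G}\mathsf{N4}+\{\Box^{\Join},\Diamond,\Diamond^{\Join},\Box_\sim,\Box^{\Join}_\sim,\Diamond^{\Join}_\sim\}$; $\mathcal{G}\mathsf{CN4K}^1=\mathcal{G}\mathsf{N4}+\{\Box^{\Join},\Diamond^1,\Diamond^{1,\Join},\Box^1_\sim,\Box^{1,\Join}_\sim,\Diamond^{\Join}_\sim\}$. A proof is a finite tree of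 sequents, each node obtained from its children by a rule, whose leaves are axioms. *)

theory Defs
  imports Main "HOL-Library.Multiset"
begin

datatype fm =
    Atom nat
  | Neg fm          (* strong negation ~ *)
  | And fm fm
  | Or fm fm
  | Imp fm fm
  | Box fm
  | Dia fm

record 'w frame =
  W   :: "'w set"
  le  :: "'w \<Rightarrow> 'w \<Rightarrow> bool"
  RBp :: "'w \<Rightarrow> 'w \<Rightarrow> bool"
  RBm :: "'w \<Rightarrow> 'w \<Rightarrow> bool"
  RDp :: "'w \<Rightarrow> 'w \<Rightarrow> bool"
  RDm :: "'w \<Rightarrow> 'w \<Rightarrow> bool"

record 'w model = "'w frame" +
  vp :: "nat \<Rightarrow> 'w set"
  vm :: "nat \<Rightarrow> 'w set"

definition is_frame :: "('w, 'b) frame_scheme \<Rightarrow> bool" where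
  "is_frame F \<longleftrightarrow> W F \<noteq> {}
     \<and> (\<forall>w\<in>W F. le F w w)
     \<and> (\<forall>u\<in>W F. \<forall>v\<in>W F. \<forall>x\<in>W F. le F u v \<longrightarrow> le F v x \<longrightarrow> le F u x)
     \<and> (\<forall>u v. (le F u v \<or> RBp F u v \<or> RBm F u v \<or> RDp F u v \<or> RDm F u v)
              \<longrightarrow> u \<in> W F \<and> v \<in> W F)"

definition is_model :: "'w model \<Rightarrow> bool" where
  "is_model M \<longleftrightarrow> is_frame M
     \<and> (\<forall>p. vp M p \<subseteq> W M \<and> vm M p \<subseteq> W M)
     \<and> (\<forall>p u v. le M u v \<longrightarrow> (u \<in> vp M p \<longrightarrow> v \<in> vp M p) \<and> (u \<in> vm M p \<longrightarrow> v \<in> vm M p))"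

text \<open>Positive (True) and negative (False) support.\<close>

fun sat :: "'w model \<Rightarrow> bool \<Rightarrow> 'w \<Rightarrow> fm \<Rightarrow> bool" where
  "sat M True w (Atom p) = (w \<in> vp M p)"
| "sat M False w (Atom p) = (w \<in> vm M p)"
| "sat M True w (Neg a) = sat M False w a"
| "sat M False w (Neg a) = sat M True w a"
| "sat M True w (And a b) = (sat M True w a \<and> sat M True w b)"
| "sat M False w (And a b) = (sat M False w a \<or> sat M False w b)"
| "sat M True w (Or a b) = (sat M True w a \<or> sat M True w b)"
| "sat M False w (Or a b) = (sat M False w a \<and> sat M False w b)"
| "sat M True w (Imp a b) =
     (\<forall>w'\<in>W M. le M w w' \<longrightarrow> sat M True w' a \<longrightarrow> sat M True w' b)"
| "sat M False w (Imp a b) = (sat M True w a \<and> sat M False w b)"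
| "sat M True w (Box a) =
     (\<forall>w'\<in>W M. le M w w' \<longrightarrow> (\<forall>w''\<in>W M. RBp M w' w'' \<longrightarrow> sat M True w'' a))"
| "sat M False w (Box a) =
     (\<forall>w'\<in>W M. le M w w' \<longrightarrow> (\<exists>w''\<in>W M. RBm M w' w'' \<and> sat M False w'' a))"
| "sat M True w (Dia a) =
     (\<forall>w'\<in>W M. le M w w' \<longrightarrow> (\<exists>w''\<in>W M. RDp M w' w'' \<and> sat M True w'' a))"
| "sat M False w (Dia a) =
     (\<forall>w'\<in>W M. le M w w' \<longrightarrow> (\<forall>w''\<in>W M. RDm M w' w'' \<longrightarrow> sat M False w'' a))"

datatype logic = CN4K | CN4Kpm | CN4Kvee | CN4Kbowtie | CN4K1

definition in_class :: "logic \<Rightarrow> ('w, 'b) frame_scheme \<Rightarrow> bool" where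
  "in_class L F = (case L of
      CN4K \<Rightarrow> True
    | CN4Kpm \<Rightarrow> RBp F = RDp F \<and> RBm F = RDm F
    | CN4Kvee \<Rightarrow> RBp F = RBm F \<and> RDp F = RDm F
    | CN4Kbowtie \<Rightarrow> RBp F = RDm F \<and> RDp F = RBm F
    | CN4K1 \<Rightarrow> RBp F = RBm F \<and> RBm F = RDp F \<and> RDp F = RDm F)"

text \<open>Worlds are drawn from the ambient type fm set set (every frame of
  cardinality at most 2^(2^aleph0), in particular the canonical model, is
  isomorphic to one carried by a subset of this type).\<close>

definition valid :: "logic \<Rightarrow> fm \<Rightarrow> bool" where
  "valid L \<phi> \<longleftrightarrow> (\<forall>M :: fm set set model. is_model M \<and> in_class L M \<longrightarrow>
                     (\<forall>w\<in>W M. sat M True w \<phi>))"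

fun conjs :: "fm list \<Rightarrow> fm" where
  "conjs [] = Imp (Atom 0) (Atom 0)"
| "conjs [a] = a"
| "conjs (a # b # xs) = And a (conjs (b # xs))"

definition seq_fm :: "fm list \<Rightarrow> fm \<Rightarrow> fm" where
  "seq_fm xs \<phi> = (if xs = [] then \<phi> else Imp (conjs xs) \<phi>)"

fun isBox :: "fm \<Rightarrow> bool" where
  "isBox (Box _) = True" | "isBox _ = False"
fun unBox :: "fm \<Rightarrow> fm" where
  "unBox (Box a) = a" | "unBox a = a"
fun isNegDia :: "fm \<Rightarrow> bool" where
  "isNegDia (Neg (Dia _)) = True" | "isNegDia _ = False"
fun unNegDia :: "fm \<Rightarrow> fm" where
  "unNegDia (Neg (Dia a)) = Neg a" | "unNegDia a = a"

definition boxes :: "fm multiset \<Rightarrow> fm multiset" where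
  "boxes \<Gamma> = image_mset unBox (filter_mset isBox \<Gamma>)"
definition negdias :: "fm multiset \<Rightarrow> fm multiset" where
  "negdias \<Gamma> = image_mset unNegDia (filter_mset isNegDia \<Gamma>)"

inductive der :: "logic \<Rightarrow> fm multiset \<Rightarrow> fm \<Rightarrow> bool" for L where
  ax:  "der L (add_mset (Atom p) \<Gamma>) (Atom p)"
| axn: "der L (add_mset (Neg (Atom p)) \<Gamma>) (Neg (Atom p))"
| nnl: "der L (add_mset a \<Gamma>) c \<Longrightarrow> der L (add_mset (Neg (Neg a)) \<Gamma>) c"
| nnr: "der L \<Gamma> a \<Longrightarrow> der L \<Gamma> (Neg (Neg a))"
| andl: "der L (add_mset a (add_mset b \<Gamma>)) c \<Longrightarrow> der L (add_mset (And a b) \<Gamma>) c"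
| andr: "der L \<Gamma> a \<Longrightarrow> der L \<Gamma> b \<Longrightarrow> der L \<Gamma> (And a b)"
| orl: "der L (add_mset a \<Gamma>) c \<Longrightarrow> der L (add_mset b \<Gamma>) c \<Longrightarrow> der L (add_mset (Or a b) \<Gamma>) c"
| orr1: "der L \<Gamma> a \<Longrightarrow> der L \<Gamma> (Or a b)"
| orr2: "der L \<Gamma> b \<Longrightarrow> der L \<Gamma> (Or a b)"
| norl: "der L (add_mset (Neg a) (add_mset (Neg b) \<Gamma>)) c \<Longrightarrow> der L (add_mset (Neg (Or a b)) \<Gamma>) c"
| norr: "der L \<Gamma> (Neg a) \<Longrightarrow> der L \<Gamma> (Neg b) \<Longrightarrow> der L \<Gamma> (Neg (Or a b))"
| nandl: "der L (add_mset (Neg a) \<Gamma>) c \<Longrightarrow> der L (add_mset (Neg b) \<Gamma>) c \<Longrightarrow> der L (add_mset (Neg (And a b)) \<Gamma>) c"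
| nandr1: "der L \<Gamma> (Neg a) \<Longrightarrow> der L \<Gamma> (Neg (And a b))"
| nandr2: "der L \<Gamma> (Neg b) \<Longrightarrow> der L \<Gamma> (Neg (And a b))"
| impl: "der L (add_mset (Imp a b) \<Gamma>) a \<Longrightarrow> der L (add_mset b \<Gamma>) c \<Longrightarrow> der L (add_mset (Imp a b) \<Gamma>) c"
| impr: "der L (add_mset a \<Gamma>) b \<Longrightarrow> der L \<Gamma> (Imp a b)"
| nimpl: "der L (add_mset a (add_mset (Neg b) \<Gamma>)) c \<Longrightarrow> der L (add_mset (Neg (Imp a b)) \<Gamma>) c"
| nimpr: "der L \<Gamma> a \<Longrightarrow> der L \<Gamma> (Neg b) \<Longrightarrow> der L \<Gamma> (Neg (Imp a b))"
| box: "L \<in> {CN4K, CN4Kvee, CN4Kpm} \<Longrightarrow> der L (boxes \<Gamma>) c \<Longrightarrow> der L \<Gamma> (Box c)"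
| dia_ns: "L \<in> {CN4K, CN4Kvee, CN4Kpm} \<Longrightarrow> der L (negdias \<Gamma>) (Neg c) \<Longrightarrow> der L \<Gamma> (Neg (Dia c))"
| dia: "L \<in> {CN4K, CN4Kbowtie} \<Longrightarrow> der L {#a#} c \<Longrightarrow> der L (add_mset (Dia a) \<Gamma>) (Dia c)"
| box_ns: "L \<in> {CN4K, CN4Kbowtie} \<Longrightarrow> der L {#Neg a#} (Neg c) \<Longrightarrow> der L (add_mset (Neg (Box a)) \<Gamma>) (Neg (Box c))"
| dia_vee: "L = CN4Kvee \<Longrightarrow> der L (add_mset a (negdias \<Gamma>)) c \<Longrightarrow> der L (add_mset (Dia a) \<Gamma>) (Dia c)"
| box_ns_vee: "L = CN4Kvee \<Longrightarrow> der L (add_mset (Neg a) (boxes \<Gamma>)) (Neg c) \<Longrightarrow> der L (add_mset (Neg (Box a)) \<Gamma>) (Neg (Box c))"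
| dia_pm: "L = CN4Kpm \<Longrightarrow> der L (add_mset a (boxes \<Gamma>)) c \<Longrightarrow> der L (add_mset (Dia a) \<Gamma>) (Dia c)"
| box_ns_pm: "L = CN4Kpm \<Longrightarrow> der L (add_mset (Neg a) (negdias \<Gamma>)) (Neg c) \<Longrightarrow> der L (add_mset (Neg (Box a)) \<Gamma>) (Neg (Box c))"
| box_bt: "L \<in> {CN4Kbowtie, CN4K1} \<Longrightarrow> der L (boxes \<Gamma> + negdias \<Gamma>) c \<Longrightarrow> der L \<Gamma> (Box c)"
| dia_ns_bt: "L \<in> {CN4Kbowtie, CN4K1} \<Longrightarrow> der L (boxes \<Gamma> + negdias \<Gamma>) (Neg c) \<Longrightarrow> der L \<Gamma> (Neg (Dia c))"
| dia_bt: "L = CN4Kbowtie \<Longrightarrow> der L {#Neg a#} c \<Longrightarrow> der L (add_mset (Neg (Box a)) \<Gamma>) (Dia c)"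
| box_ns_bt: "L = CN4Kbowtie \<Longrightarrow> der L {#a#} (Neg c) \<Longrightarrow> der L (add_mset (Dia a) \<Gamma>) (Neg (Box c))"
| dia_1: "L = CN4K1 \<Longrightarrow> der L (add_mset a (boxes \<Gamma> + negdias \<Gamma>)) c \<Longrightarrow> der L (add_mset (Dia a) \<Gamma>) (Dia c)"
| box_ns_1: "L = CN4K1 \<Longrightarrow> der L (add_mset (Neg a) (boxes \<Gamma> + negdias \<Gamma>)) (Neg c) \<Longrightarrow> der L (add_mset (Neg (Box a)) \<Gamma>) (Neg (Box c))"
| dia_1bt: "L = CN4K1 \<Longrightarrow> der L (add_mset (Neg a) (boxes \<Gamma> + negdias \<Gamma>)) c \<Longrightarrow> der L (add_mset (Neg (Box a)) \<Gamma>) (Dia c)"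
| box_ns_1bt: "L = CN4K1 \<Longrightarrow> der L (add_mset a (boxes \<Gamma> + negdias \<Gamma>)) (Neg c) \<Longrightarrow> der L (add_mset (Dia a) \<Gamma>) (Neg (Box c))"

end

theory Submission
  imports Defs
begin


fun fB :: "fm \<Rightarrow> fm multiset" where "fB (Box a) = {#a#}" | "fB _ = {#}"
fun fN :: "fm \<Rightarrow> fm multiset" where "fN (Neg (Dia a)) = {#Neg a#}" | "fN _ = {#}"
fun fD :: "fm \<Rightarrow> fm multiset" where "fD (Dia a) = {#a#}" | "fD _ = {#}"
fun fNB :: "fm \<Rightarrow> fm multiset" where "fNB (Neg (Box a)) = {#Neg a#}" | "fNB _ = {#}"
definition fBN :: "fm \<Rightarrow> fm multiset" where "fBN x = fB x + fN x"
definition f0 :: "fm \<Rightarrow> fm multiset" where "f0 x = {#}"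

definition FF :: "(fm \<Rightarrow> fm multiset) \<Rightarrow> fm multiset \<Rightarrow> fm multiset" where
  "FF f G = sum_mset (image_mset f G)"

lemma FF_simps[simp]: "FF f {#} = {#}" "FF f (add_mset x G) = f x + FF f G"
  "FF f (G + H) = FF f G + FF f H"
  by (auto simp: FF_def)

lemma boxes_FF: "boxes G = FF fB G"
  by (induction G) (auto simp: boxes_def elim: isBox.elims)

lemma negdias_FF: "negdias G = FF fN G"
proof (induction G)
  case (add x G) then show ?case
    by (cases x rule: fN.cases) (auto simp: negdias_def)
qed (simp add: negdias_def)

fun ldec :: "fm \<Rightarrow> fm multiset list" where
  "ldec (Neg (Neg a)) = [{#a#}]"
| "ldec (And a b) = [{#a, b#}]"
| "ldec (Or a b) = [{#a#}, {#b#}]"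
| "ldec (Neg (Or a b)) = [{#Neg a, Neg b#}]"
| "ldec (Neg (And a b)) = [{#Neg a#}, {#Neg b#}]"
| "ldec (Neg (Imp a b)) = [{#a, Neg b#}]"
| "ldec _ = []"

fun rdec :: "fm \<Rightarrow> (fm multiset \<times> fm) list list" where
  "rdec (Neg (Neg a)) = [[({#},a)]]"
| "rdec (And a b) = [[({#},a),({#},b)]]"
| "rdec (Or a b) = [[({#},a)],[({#},b)]]"
| "rdec (Neg (Or a b)) = [[({#},Neg a),({#},Neg b)]]"
| "rdec (Neg (And a b)) = [[({#},Neg a)],[({#},Neg b)]]"
| "rdec (Imp a b) = [[({#a#}, b)]]"
| "rdec (Neg (Imp a b)) = [[({#},a),({#},Neg b)]]"
| "rdec _ = []"

fun isat :: "fm \<Rightarrow> bool" where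
  "isat (Atom p) = True" | "isat (Neg (Atom p)) = True" | "isat _ = False"

inductive mrule :: "logic \<Rightarrow> fm multiset \<Rightarrow> (fm \<Rightarrow> fm multiset) \<Rightarrow> fm multiset \<Rightarrow> fm \<Rightarrow> fm \<Rightarrow> bool"
  for L where
  m_box: "L \<in> {CN4K, CN4Kvee, CN4Kpm} \<Longrightarrow> mrule L {#} fB {#} c (Box c)"
| m_dia_ns: "L \<in> {CN4K, CN4Kvee, CN4Kpm} \<Longrightarrow> mrule L {#} fN {#} (Neg c) (Neg (Dia c))"
| m_dia: "L \<in> {CN4K, CN4Kbowtie} \<Longrightarrow> mrule L {#Dia a#} f0 {#a#} c (Dia c)"
| m_box_ns: "L \<in> {CN4K, CN4Kbowtie} \<Longrightarrow> mrule L {#Neg (Box a)#} f0 {#Neg a#} (Neg c) (Neg (Box c))"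
| m_dia_vee: "L = CN4Kvee \<Longrightarrow> mrule L {#Dia a#} fN {#a#} c (Dia c)"
| m_box_ns_vee: "L = CN4Kvee \<Longrightarrow> mrule L {#Neg (Box a)#} fB {#Neg a#} (Neg c) (Neg (Box c))"
| m_dia_pm: "L = CN4Kpm \<Longrightarrow> mrule L {#Dia a#} fB {#a#} c (Dia c)"
| m_box_ns_pm: "L = CN4Kpm \<Longrightarrow> mrule L {#Neg (Box a)#} fN {#Neg a#} (Neg c) (Neg (Box c))"
| m_box_bt: "L \<in> {CN4Kbowtie, CN4K1} \<Longrightarrow> mrule L {#} fBN {#} c (Box c)"
| m_dia_ns_bt: "L \<in> {CN4Kbowtie, CN4K1} \<Longrightarrow> mrule L {#} fBN {#} (Neg c) (Neg (Dia c))"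
| m_dia_bt: "L = CN4Kbowtie \<Longrightarrow> mrule L {#Neg (Box a)#} f0 {#Neg a#} c (Dia c)"
| m_box_ns_bt: "L = CN4Kbowtie \<Longrightarrow> mrule L {#Dia a#} f0 {#a#} (Neg c) (Neg (Box c))"
| m_dia_1: "L = CN4K1 \<Longrightarrow> mrule L {#Dia a#} fBN {#a#} c (Dia c)"
| m_box_ns_1: "L = CN4K1 \<Longrightarrow> mrule L {#Neg (Box a)#} fBN {#Neg a#} (Neg c) (Neg (Box c))"
| m_dia_1bt: "L = CN4K1 \<Longrightarrow> mrule L {#Neg (Box a)#} fBN {#Neg a#} c (Dia c)"
| m_box_ns_1bt: "L = CN4K1 \<Longrightarrow> mrule L {#Dia a#} fBN {#a#} (Neg c) (Neg (Box c))"

inductive dh :: "logic \<Rightarrow> nat \<Rightarrow> fm multiset \<Rightarrow> fm \<Rightarrow> bool" for L where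
  hax: "isat \<phi> \<Longrightarrow> \<phi> \<in># G \<Longrightarrow> dh L n G \<phi>"
| hl: "ldec x \<noteq> [] \<Longrightarrow> (\<forall>M\<in>set (ldec x). dh L n (M + G) \<phi>) \<Longrightarrow> dh L (Suc n) (add_mset x G) \<phi>"
| himp: "dh L n (add_mset (Imp a b) G) a \<Longrightarrow> dh L n (add_mset b G) \<phi> \<Longrightarrow> dh L (Suc n) (add_mset (Imp a b) G) \<phi>"
| hr: "ps \<in> set (rdec \<phi>) \<Longrightarrow> (\<forall>p\<in>set ps. dh L n (fst p + G) (snd p)) \<Longrightarrow> dh L (Suc n) G \<phi>"
| hm: "mrule L Y f M \<psi> \<phi> \<Longrightarrow> dh L n (M + FF f G) \<psi> \<Longrightarrow> dh L (Suc n) (Y + G) \<phi>"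

lemma mrule_f: "mrule L Y f M \<psi> \<phi> \<Longrightarrow> f \<in> {f0, fB, fN, fBN}"
  by (induction rule: mrule.induct) auto

lemma mrule_Y: "mrule L Y f M \<psi> \<phi> \<Longrightarrow> Y = {#} \<or> (\<exists>a. Y = {#Dia a#} \<or> Y = {#Neg (Box a)#})"
  by (induction rule: mrule.induct) auto

lemma mrule_fY: "mrule L Y f M \<psi> \<phi> \<Longrightarrow> y \<in># Y \<Longrightarrow> f y = {#}"
  by (induction rule: mrule.induct) (auto simp: f0_def fBN_def)

lemma dh_mono: "dh L n G \<phi> \<Longrightarrow> n \<le> m \<Longrightarrow> dh L m G \<phi>"
proof (induction arbitrary: m rule: dh.induct)
  case (hax \<phi> G n) then show ?case by (auto intro: dh.hax)
next
  case (hl x n G \<phi>) then obtain k where "m = Suc k" "n \<le> k" by (cases m) auto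
  then show ?case using hl by (auto intro!: dh.hl)
next
  case (himp n a b G \<phi>) then obtain k where "m = Suc k" "n \<le> k" by (cases m) auto
  then show ?case using himp by (auto intro!: dh.himp)
next
  case (hr ps \<phi> n G) then obtain k where "m = Suc k" "n \<le> k" by (cases m) auto
  then show ?case using hr by (auto intro!: dh.hr)
next
  case (hm Y f M \<psi> \<phi> n G) then obtain k where "m = Suc k" "n \<le> k" by (cases m) auto
  then show ?case using hm by (auto intro: dh.hm)
qed

lemma dh_weak: "dh L n G \<phi> \<Longrightarrow> dh L n (G + H) \<phi>"
proof (induction arbitrary: H rule: dh.induct)
  case (hax \<phi> G n) then show ?case by (auto intro: dh.hax)
next
  case (hl x n G \<phi>) then show ?case
    using dh.hl[where G="G + H"] by (simp add: add.assoc)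
next
  case (himp n a b G \<phi>) then show ?case
    using dh.himp[where G="G + H"] by simp
next
  case (hr ps \<phi> n G) then show ?case
    using dh.hr[where G="G + H"] by (simp add: add.assoc)
next
  case (hm Y f M \<psi> \<phi> n G) then show ?case
    using dh.hm[where G="G + H"] by (simp add: add.assoc)
qed

lemma isat_ldec: "isat x \<Longrightarrow> ldec x = []"
  by (cases x rule: isat.cases) auto

lemma diff_assoc1: "x \<in># G \<Longrightarrow> A + G - {#x#} = A + (G - {#x#})"
  by (metis add_mset_remove_trivial insert_DiffM union_mset_add_mset_right)

lemma ldec_f: "ldec x \<noteq> [] \<Longrightarrow> f \<in> {f0, fB, fN, fBN} \<Longrightarrow> f x = {#}"
  by (cases x rule: ldec.cases) (auto simp: f0_def fBN_def)

lemma mrule_Y_ldec: "mrule L Y f M \<psi> \<phi> \<Longrightarrow> ldec x \<noteq> [] \<Longrightarrow> x \<notin># Y"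
  by (induction rule: mrule.induct) auto

lemma t1: "x \<in># G \<Longrightarrow> x \<noteq> y \<Longrightarrow> M + (add_mset y G - {#x#}) = add_mset y (M + (G - {#x#}))"
  by simp
lemma t2: "x \<in># G \<Longrightarrow> M + (M' + G - {#x#}) = M' + (M + (G - {#x#}))"
  by (metis diff_assoc1 add.left_commute)

lemma dh_inv: "dh L n G \<phi> \<Longrightarrow> x \<in># G \<Longrightarrow> M \<in> set (ldec x) \<Longrightarrow> dh L n (M + (G - {#x#})) \<phi>"
proof (induction arbitrary: x M rule: dh.induct)
  case (hax \<phi> G n)
  then have "x \<noteq> \<phi>" using isat_ldec by fastforce
  then show ?case using hax by (auto intro!: dh.hax simp: in_diff_count)
next
  case (hl y n G \<phi>)
  show ?case
  proof (cases "y = x")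
    case True
    then have "dh L n (M + G) \<phi>" using hl(2) hl(4) by blast
    then have "dh L (Suc n) (M + G) \<phi>" by (rule dh_mono) simp
    then show ?thesis using True by simp
  next
    case False
    then have xG: "x \<in># G" using hl(3) by auto
    have "\<forall>M'\<in>set (ldec y). dh L n (M' + (M + (G - {#x#}))) \<phi>"
    proof
      fix M' assume M': "M' \<in> set (ldec y)"
      have "x \<in># M' + G" using xG by simp
      then have "dh L n (M + (M' + G - {#x#})) \<phi>" using hl(2) hl(4) M' by blast
      then show "dh L n (M' + (M + (G - {#x#}))) \<phi>" using t2[OF xG] by metis
    qed
    then have "dh L (Suc n) (add_mset y (M + (G - {#x#}))) \<phi>"
      using hl(1) by (intro dh.hl) auto
    then show ?thesis using t1[OF xG] False by metis
  qed
next
  case (himp n a b G \<phi>)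
  then have ne: "x \<noteq> Imp a b" by auto
  then have xG: "x \<in># G" using himp by auto
  have 1: "dh L n (add_mset (Imp a b) (M + (G - {#x#}))) a"
    using himp(3)[of x M] himp(6) xG ne t1[OF xG ne] by auto
  have 2: "dh L n (add_mset b (M + (G - {#x#}))) \<phi>"
  proof (cases "x = b")
    case True
    have "add_mset b (M + (G - {#b#})) = M + G" using xG True
      by (metis insert_DiffM union_mset_add_mset_right)
    moreover have "dh L n (M + G) \<phi>" using himp(4)[of x M] himp(6) True by simp
    ultimately show ?thesis using True by metis
  next
    case False
    then show ?thesis using himp(4)[of x M] himp(6) xG t1[OF xG False] by auto
  qed
  show ?case using dh.himp[OF 1 2] t1[OF xG ne] by metis
next
  case (hr ps \<phi> n G)
  have "\<forall>p\<in>set ps. dh L n (fst p + (M + (G - {#x#}))) (snd p)"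
  proof
    fix p assume p: "p \<in> set ps"
    have "x \<in># fst p + G" using hr by simp
    then have "dh L n (M + (fst p + G - {#x#})) (snd p)" using hr p by blast
    then show "dh L n (fst p + (M + (G - {#x#}))) (snd p)" using hr t2 by metis
  qed
  then show ?case using hr by (intro dh.hr) auto
next
  case (hm Y f M' \<psi> \<phi> n G)
  have "ldec x \<noteq> []" using hm(5) by auto
  then have ne: "x \<notin># Y" using mrule_Y_ldec[OF hm(1)] by auto
  then have xG: "x \<in># G" using hm by auto
  have fx: "f x = {#}" using ldec_f[of x f] mrule_f[OF hm(1)] \<open>ldec x \<noteq> []\<close> by auto
  have GG: "G = add_mset x (G - {#x#})" using xG by simp
  have "FF f G = FF f (G - {#x#})" using fx by (subst GG) simp
  then have "dh L n (M' + FF f (M + (G - {#x#}))) \<psi>"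
    using dh_weak[OF hm(2), of "FF f M"] by (simp add: add_ac)
  then have "dh L (Suc n) (Y + (M + (G - {#x#}))) \<phi>" by (rule dh.hm[OF hm(1)])
  moreover have "M + (Y + G - {#x#}) = Y + (M + (G - {#x#}))" using t2[OF xG] .
  ultimately show ?case by metis
qed

lemma mrule_Y_imp: "mrule L Y f M \<psi> \<phi> \<Longrightarrow> Imp a b \<notin># Y"
  by (induction rule: mrule.induct) auto

lemma mrule_f_imp: "mrule L Y f M \<psi> \<phi> \<Longrightarrow> f (Imp a b) = {#}"
  by (induction rule: mrule.induct) (auto simp: f0_def fBN_def)

lemma dh_inv_imp: "dh L n G \<phi> \<Longrightarrow> Imp a b \<in># G \<Longrightarrow> dh L n (add_mset b (G - {#Imp a b#})) \<phi>"
proof (induction rule: dh.induct)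
  case (hax \<phi> G n)
  then have "Imp a b \<noteq> \<phi>" by auto
  then show ?case using hax by (auto intro!: dh.hax simp: in_diff_count)
next
  case (hl y n G \<phi>)
  have False': "y \<noteq> Imp a b" using hl(1) by auto
  then have xG: "Imp a b \<in># G" using hl(3) by auto
  have "\<forall>M'\<in>set (ldec y). dh L n (M' + (add_mset b (G - {#Imp a b#}))) \<phi>"
  proof
    fix M' assume M': "M' \<in> set (ldec y)"
    have "Imp a b \<in># M' + G" using xG by simp
    then have "dh L n (add_mset b (M' + G - {#Imp a b#})) \<phi>" using hl(2) M' by blast
    then show "dh L n (M' + (add_mset b (G - {#Imp a b#}))) \<phi>" using t2[OF xG, of "{#b#}" M'] by simp
  qed
  then have "dh L (Suc n) (add_mset y (add_mset b (G - {#Imp a b#}))) \<phi>"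
    using hl(1) by (intro dh.hl) auto
  then show ?case using t1[OF xG, of y "{#b#}"] False' by (simp add: add_mset_commute)
next
  case (himp n a' b' G \<phi>)
  show ?case
  proof (cases "Imp a' b' = Imp a b")
    case True
    then have "dh L n (add_mset b G) \<phi>" using himp by simp
    then have "dh L (Suc n) (add_mset b G) \<phi>" by (rule dh_mono) simp
    then show ?thesis using True by simp
  next
    case False
    then have ne: "Imp a b \<noteq> Imp a' b'" by auto
    then have xG: "Imp a b \<in># G" using himp by auto
    have 1: "dh L n (add_mset (Imp a' b') (add_mset b (G - {#Imp a b#}))) a'"
      using himp(3) xG ne t1[OF xG ne, of "{#b#}"] by (auto simp: add_mset_commute)
    have 2: "dh L n (add_mset b' (add_mset b (G - {#Imp a b#}))) \<phi>"
    proof (cases "Imp a b = b'")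
      case True
      have "add_mset b' (add_mset b (G - {#b'#})) = add_mset b G" using xG True
        by (metis insert_DiffM add_mset_commute)
      moreover have "dh L n (add_mset b G) \<phi>" using himp(4) True by simp
      ultimately show ?thesis using True by metis
    next
      case False
      then show ?thesis using himp(4) xG t1[OF xG False, of "{#b#}"] by (auto simp: add_mset_commute)
    qed
    show ?thesis using dh.himp[OF 1 2] t1[OF xG ne, of "{#b#}"] by (simp add: add_mset_commute)
  qed
next
  case (hr ps \<phi> n G)
  have "\<forall>p\<in>set ps. dh L n (fst p + (add_mset b (G - {#Imp a b#}))) (snd p)"
  proof
    fix p assume p: "p \<in> set ps"
    have "Imp a b \<in># fst p + G" using hr by simp
    then have "dh L n (add_mset b (fst p + G - {#Imp a b#})) (snd p)" using hr p by blast
    then show "dh L n (fst p + (add_mset b (G - {#Imp a b#}))) (snd p)" using hr t2[of "Imp a b" G "{#b#}" "fst p"] by simp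
  qed
  then show ?case using hr by (intro dh.hr) auto
next
  case (hm Y f M' \<psi> \<phi> n G)
  have ne: "Imp a b \<notin># Y" using mrule_Y_imp[OF hm(1)] by auto
  then have xG: "Imp a b \<in># G" using hm by auto
  have fx: "f (Imp a b) = {#}" using mrule_f_imp[OF hm(1)] by auto
  have GG: "G = add_mset (Imp a b) (G - {#Imp a b#})" using xG by simp
  have "FF f G = FF f (G - {#Imp a b#})" using fx by (subst GG) simp
  then have "dh L n (M' + FF f (add_mset b (G - {#Imp a b#}))) \<psi>"
    using dh_weak[OF hm(2), of "f b"] by (simp add: add_ac)
  then have "dh L (Suc n) (Y + (add_mset b (G - {#Imp a b#}))) \<phi>" by (rule dh.hm[OF hm(1)])
  moreover have "{#b#} + (Y + G - {#Imp a b#}) = Y + ({#b#} + (G - {#Imp a b#}))" using t2[OF xG] .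
  ultimately show ?case by simp
qed

lemma am2: "add_mset x (add_mset x G) = add_mset y G' \<Longrightarrow> y \<noteq> x \<Longrightarrow> y \<in># G \<and> G' = add_mset x (add_mset x (G - {#y#}))"
  by (metis add_eq_conv_diff add_mset_remove_trivial diff_union_swap insert_noteq_member union_single_eq_member)

lemma f_cases: "f \<in> {f0, fB, fN, fBN} \<Longrightarrow> f x = {#} \<or> (\<exists>z. f x = {#z#})"
  by (cases x rule: fN.cases) (auto simp: f0_def fBN_def)

lemma dh_contr_M:
  assumes IH: "\<And>x G \<phi>. dh L m (add_mset x (add_mset x G)) \<phi> \<Longrightarrow> dh L m (add_mset x G) \<phi>"
  shows "dh L m (M + M + G) \<phi> \<Longrightarrow> dh L m (M + G) \<phi>"
proof (induction M arbitrary: G)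
  case empty then show ?case by simp
next
  case (add z M)
  have "add_mset z M + add_mset z M + G = add_mset z (add_mset z (M + M + G))" by simp
  then have "dh L m (add_mset z (M + M + G)) \<phi>" using IH add.prems by metis
  then have "dh L m (M + M + add_mset z G) \<phi>" by simp
  then have "dh L m (M + add_mset z G) \<phi>" using add.IH by blast
  then show ?case by simp
qed

lemma dh_contr: "dh L n (add_mset x (add_mset x G)) \<phi> \<Longrightarrow> dh L n (add_mset x G) \<phi>"
proof (induction n arbitrary: x G \<phi> rule: less_induct)
  case (less n)
  from less.prems show ?case
  proof (cases rule: dh.cases)
    case hax
    then show ?thesis by (auto intro: dh.hax)
  next
    case (hl y m G')
    have IHM: "\<And>M G \<phi>. dh L m (M + M + G) \<phi> \<Longrightarrow> dh L m (M + G) \<phi>"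
      using dh_contr_M[of L m] less.IH hl(1) by blast
    show ?thesis
    proof (cases "y = x")
      case True
      then have G': "G' = add_mset x G" using hl(2) by simp
      have "\<forall>M\<in>set (ldec x). dh L m (M + G) \<phi>"
      proof
        fix M assume M: "M \<in> set (ldec x)"
        then have "dh L m (M + add_mset x G) \<phi>" using hl(4) True G' by blast
        moreover have "x \<in># M + add_mset x G" by simp
        ultimately have "dh L m (M + (M + add_mset x G - {#x#})) \<phi>" using dh_inv M by blast
        then have "dh L m (M + M + G) \<phi>" by (simp add: add.assoc)
        then show "dh L m (M + G) \<phi>" by (rule IHM)
      qed
      then show ?thesis using hl(1,3) True by (auto intro: dh.hl)
    next
      case False
      from am2[OF hl(2) False] have yG: "y \<in># G" and G': "G' = add_mset x (add_mset x (G - {#y#}))" by auto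
      have "\<forall>M\<in>set (ldec y). dh L m (M + add_mset x (G - {#y#})) \<phi>"
      proof
        fix M assume M: "M \<in> set (ldec y)"
        then have "dh L m (add_mset x (add_mset x (M + (G - {#y#})))) \<phi>" using hl(4) G' by auto
        then have "dh L m (add_mset x (M + (G - {#y#}))) \<phi>" using less.IH hl(1) by blast
        then show "dh L m (M + add_mset x (G - {#y#})) \<phi>" by simp
      qed
      then have "dh L (Suc m) (add_mset y (add_mset x (G - {#y#}))) \<phi>" using hl(3) by (auto intro: dh.hl)
      moreover have "add_mset y (add_mset x (G - {#y#})) = add_mset x G" using yG
        by (metis add_mset_commute insert_DiffM)
      ultimately show ?thesis using hl(1) by simp
    qed
  next
    case (himp m a b G')
    show ?thesis
    proof (cases "Imp a b = x")
      case True
      then have G': "G' = add_mset x G" using himp(2) by simp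
      have 1: "dh L m (add_mset x G) a" using himp(3) G' True less.IH himp(1) by blast
      have "dh L m (add_mset b (add_mset x G)) \<phi>" using himp(4) G' by simp
      then have "dh L m (add_mset b (add_mset b G)) \<phi>" using dh_inv_imp[of L m "add_mset b (add_mset x G)" \<phi> a b] True by simp
      then have 2: "dh L m (add_mset b G) \<phi>" using less.IH himp(1) by blast
      show ?thesis using dh.himp[of L m a b G, OF _ 2] 1 True himp(1) by simp
    next
      case False
      from am2[OF himp(2)] False have yG: "Imp a b \<in># G" and G': "G' = add_mset x (add_mset x (G - {#Imp a b#}))" by auto
      let ?H = "G - {#Imp a b#}"
      have "dh L m (add_mset x (add_mset x (add_mset (Imp a b) ?H))) a" using himp(3) G' by (simp add: add_mset_commute)
      then have "dh L m (add_mset x (add_mset (Imp a b) ?H)) a" using less.IH[of m x "add_mset (Imp a b) ?H" a] himp(1) by simp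
      then have 1: "dh L m (add_mset (Imp a b) (add_mset x ?H)) a" by (simp add: add_mset_commute)
      have "dh L m (add_mset x (add_mset x (add_mset b ?H))) \<phi>" using himp(4) G' by (simp add: add_mset_commute)
      then have "dh L m (add_mset x (add_mset b ?H)) \<phi>" using less.IH[of m x "add_mset b ?H" \<phi>] himp(1) by simp
      then have 2: "dh L m (add_mset b (add_mset x ?H)) \<phi>" by (simp add: add_mset_commute)
      have "dh L (Suc m) (add_mset (Imp a b) (add_mset x ?H)) \<phi>" by (rule dh.himp[OF 1 2])
      moreover have "add_mset (Imp a b) (add_mset x ?H) = add_mset x G" using yG
        by (metis add_mset_commute insert_DiffM)
      ultimately show ?thesis using himp(1) by simp
    qed
  next
    case (hr ps m)
    have "\<forall>p\<in>set ps. dh L m (fst p + add_mset x G) (snd p)"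
    proof
      fix p assume "p \<in> set ps"
      then have "dh L m (add_mset x (add_mset x (fst p + G))) (snd p)" using hr(3) by auto
      then have "dh L m (add_mset x (fst p + G)) (snd p)" using less.IH hr(1) by blast
      then show "dh L m (fst p + add_mset x G) (snd p)" by simp
    qed
    then show ?thesis using hr(1,2) dh.hr[of ps \<phi> L m "add_mset x G"] by simp
  next
    case (hm Y f M \<psi> m G')
    have fs: "f \<in> {f0, fB, fN, fBN}" by (rule mrule_f[OF hm(3)])
    show ?thesis
    proof (cases "x \<in># Y")
      case True
      then have Y: "Y = {#x#}" using mrule_Y[OF hm(3)] by auto
      then have G': "G' = add_mset x G" using hm(2) by simp
      have fx: "f x = {#}" using mrule_fY[OF hm(3)] True by blast
      have "dh L m (M + FF f G) \<psi>" using hm(4) G' fx by simp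
      then have "dh L (Suc m) (Y + G) \<phi>" by (rule dh.hm[OF hm(3)])
      then show ?thesis using Y hm(1) by simp
    next
      case False
      have "x \<in># G'" using hm(2) False by (metis add_mset_add_single union_iff union_single_eq_member)
      then obtain G1 where G1: "G' = add_mset x G1" by (metis insert_DiffM)
      have "add_mset x G = Y + G1" using hm(2) G1 by (metis add_mset_add_single add_left_imp_eq add.left_commute add.commute)
      moreover have "x \<in># add_mset x G" by simp
      ultimately have "x \<in># Y + G1" by metis
      then have "x \<in># G1" using False by simp
      then obtain G0 where G0: "G1 = add_mset x G0" by (metis insert_DiffM)
      have GY: "G = Y + G0" using hm(2) G1 G0 by (metis add_mset_add_single add_left_imp_eq add.left_commute add.commute)
      have "dh L m (M + FF f (add_mset x G0)) \<psi>"
      proof (cases "f x = {#}")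
        case True
        then show ?thesis using hm(4) G1 G0 by simp
      next
        case False
        then obtain z where z: "f x = {#z#}" using f_cases[OF fs] by blast
        have "dh L m (add_mset z (add_mset z (M + FF f G0))) \<psi>" using hm(4) G1 G0 z by simp
        then have "dh L m (add_mset z (M + FF f G0)) \<psi>" using less.IH hm(1) by blast
        then show ?thesis using z by simp
      qed
      then have "dh L (Suc m) (Y + add_mset x G0) \<phi>" by (rule dh.hm[OF hm(3)])
      then show ?thesis using GY hm(1) by simp
    qed
  qed
qed

lemma FF_f0[simp]: "FF f0 G = {#}"
  by (induction G) (auto simp: f0_def)

lemma FF_fBN: "FF fBN G = FF fB G + FF fN G"
  by (induction G) (auto simp: fBN_def add_ac)

lemma dh_der: "dh L n G \<phi> \<Longrightarrow> der L G \<phi>"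
proof (induction rule: dh.induct)
  case (hax \<phi> G n)
  then show ?case
  proof (cases \<phi> rule: isat.cases)
    case (1 p) then show ?thesis using hax der.ax[of L p "G - {#Atom p#}"] by simp
  next
    case (2 p) then show ?thesis using hax der.axn[of L p "G - {#Neg (Atom p)#}"] by simp
  qed auto
next
  case (hl x n G \<phi>)
  then show ?case
    by (cases x rule: ldec.cases) (auto intro: der.nnl der.andl der.orl der.norl der.nandl der.nimpl)
next
  case (himp n a b G \<phi>)
  then show ?case by (auto intro: der.impl)
next
  case (hr ps \<phi> n G)
  then show ?case
    by (cases \<phi> rule: rdec.cases) (auto intro: der.nnr der.andr der.orr1 der.orr2 der.norr der.nandr1 der.nandr2 der.impr der.nimpr)
next
  case (hm Y f M \<psi> \<phi> n G)
  from hm(1) show ?case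
  proof (cases rule: mrule.cases)
    case m_box with hm show ?thesis by (clarsimp simp: boxes_FF negdias_FF FF_fBN) (rule der.box; simp add: boxes_FF negdias_FF FF_fBN)
  next
    case m_dia_ns with hm show ?thesis by (clarsimp simp: boxes_FF negdias_FF FF_fBN) (rule der.dia_ns; simp add: boxes_FF negdias_FF FF_fBN)
  next
    case m_dia with hm show ?thesis by (clarsimp simp: boxes_FF negdias_FF FF_fBN) (rule der.dia; simp add: boxes_FF negdias_FF FF_fBN)
  next
    case m_box_ns with hm show ?thesis by (clarsimp simp: boxes_FF negdias_FF FF_fBN) (rule der.box_ns; simp add: boxes_FF negdias_FF FF_fBN)
  next
    case m_dia_vee with hm show ?thesis by (clarsimp simp: boxes_FF negdias_FF FF_fBN) (rule der.dia_vee; simp add: boxes_FF negdias_FF FF_fBN)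
  next
    case m_box_ns_vee with hm show ?thesis by (clarsimp simp: boxes_FF negdias_FF FF_fBN) (rule der.box_ns_vee; simp add: boxes_FF negdias_FF FF_fBN)
  next
    case m_dia_pm with hm show ?thesis by (clarsimp simp: boxes_FF negdias_FF FF_fBN) (rule der.dia_pm; simp add: boxes_FF negdias_FF FF_fBN)
  next
    case m_box_ns_pm with hm show ?thesis by (clarsimp simp: boxes_FF negdias_FF FF_fBN) (rule der.box_ns_pm; simp add: boxes_FF negdias_FF FF_fBN)
  next
    case m_box_bt with hm show ?thesis by (clarsimp simp: boxes_FF negdias_FF FF_fBN) (rule der.box_bt; simp add: boxes_FF negdias_FF FF_fBN)
  next
    case m_dia_ns_bt with hm show ?thesis by (clarsimp simp: boxes_FF negdias_FF FF_fBN) (rule der.dia_ns_bt; simp add: boxes_FF negdias_FF FF_fBN)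
  next
    case m_dia_bt with hm show ?thesis by (clarsimp simp: boxes_FF negdias_FF FF_fBN) (rule der.dia_bt; simp add: boxes_FF negdias_FF FF_fBN)
  next
    case m_box_ns_bt with hm show ?thesis by (clarsimp simp: boxes_FF negdias_FF FF_fBN) (rule der.box_ns_bt; simp add: boxes_FF negdias_FF FF_fBN)
  next
    case m_dia_1 with hm show ?thesis by (clarsimp simp: boxes_FF negdias_FF FF_fBN) (rule der.dia_1; simp add: boxes_FF negdias_FF FF_fBN)
  next
    case m_box_ns_1 with hm show ?thesis by (clarsimp simp: boxes_FF negdias_FF FF_fBN) (rule der.box_ns_1; simp add: boxes_FF negdias_FF FF_fBN)
  next
    case m_dia_1bt with hm show ?thesis by (clarsimp simp: boxes_FF negdias_FF FF_fBN) (rule der.dia_1bt; simp add: boxes_FF negdias_FF FF_fBN)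
  next
    case m_box_ns_1bt with hm show ?thesis by (clarsimp simp: boxes_FF negdias_FF FF_fBN) (rule der.box_ns_1bt; simp add: boxes_FF negdias_FF FF_fBN)
  qed
qed

lemma HL1: "ldec x = [M] \<Longrightarrow> \<exists>n. dh L n (M + G) \<phi> \<Longrightarrow> \<exists>n. dh L n (add_mset x G) \<phi>"
  using dh.hl[of x L] by fastforce

lemma HL2: "ldec x = [Ma, Mb] \<Longrightarrow> \<exists>n. dh L n (Ma + G) \<phi> \<Longrightarrow> \<exists>n. dh L n (Mb + G) \<phi> \<Longrightarrow> \<exists>n. dh L n (add_mset x G) \<phi>"
proof -
  assume a: "ldec x = [Ma, Mb]" "\<exists>n. dh L n (Ma + G) \<phi>" "\<exists>n. dh L n (Mb + G) \<phi>"
  then obtain n1 n2 where "dh L n1 (Ma + G) \<phi>" "dh L n2 (Mb + G) \<phi>" by blast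
  then have "dh L (max n1 n2) (Ma + G) \<phi>" "dh L (max n1 n2) (Mb + G) \<phi>" using dh_mono by fastforce+
  then show ?thesis using a(1) dh.hl[of x L "max n1 n2" G \<phi>] by auto
qed

lemma HR1: "[(M, \<psi>)] \<in> set (rdec \<phi>) \<Longrightarrow> \<exists>n. dh L n (M + G) \<psi> \<Longrightarrow> \<exists>n. dh L n G \<phi>"
  using dh.hr[of "[(M, \<psi>)]" \<phi> L] by fastforce

lemma HR2: "[(Ma, \<psi>a), (Mb, \<psi>b)] \<in> set (rdec \<phi>) \<Longrightarrow> \<exists>n. dh L n (Ma + G) \<psi>a \<Longrightarrow> \<exists>n. dh L n (Mb + G) \<psi>b \<Longrightarrow> \<exists>n. dh L n G \<phi>"
proof -
  assume a: "[(Ma, \<psi>a), (Mb, \<psi>b)] \<in> set (rdec \<phi>)" "\<exists>n. dh L n (Ma + G) \<psi>a" "\<exists>n. dh L n (Mb + G) \<psi>b"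
  then obtain n1 n2 where "dh L n1 (Ma + G) \<psi>a" "dh L n2 (Mb + G) \<psi>b" by blast
  then have "dh L (max n1 n2) (Ma + G) \<psi>a" "dh L (max n1 n2) (Mb + G) \<psi>b" using dh_mono by fastforce+
  then show ?thesis using a(1) dh.hr[of "[(Ma, \<psi>a), (Mb, \<psi>b)]" \<phi> L "max n1 n2" G] by auto
qed

lemma HI: "\<exists>n. dh L n (add_mset (Imp a b) G) a \<Longrightarrow> \<exists>n. dh L n (add_mset b G) \<phi> \<Longrightarrow> \<exists>n. dh L n (add_mset (Imp a b) G) \<phi>"
proof -
  assume a: "\<exists>n. dh L n (add_mset (Imp a b) G) a" "\<exists>n. dh L n (add_mset b G) \<phi>"
  then obtain n1 n2 where "dh L n1 (add_mset (Imp a b) G) a" "dh L n2 (add_mset b G) \<phi>" by blast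
  then have "dh L (max n1 n2) (add_mset (Imp a b) G) a" "dh L (max n1 n2) (add_mset b G) \<phi>" using dh_mono by fastforce+
  then show ?thesis using dh.himp by blast
qed

lemma HM: "mrule L Y f M \<psi> \<phi> \<Longrightarrow> \<exists>n. dh L n (M + FF f G) \<psi> \<Longrightarrow> \<exists>n. dh L n (Y + G) \<phi>"
  using dh.hm by blast

lemma der_dh: "der L G \<phi> \<Longrightarrow> \<exists>n. dh L n G \<phi>"
proof (induction rule: der.induct)
  case (ax p \<Gamma>) then show ?case using dh.hax[of "Atom p"] by fastforce
next
  case (axn p \<Gamma>) then show ?case using dh.hax[of "Neg (Atom p)"] by fastforce
next
  case (nnl a \<Gamma> c) then show ?case using HL1[where x="Neg (Neg a)" and M="{#a#}"] by simp
next
  case (nnr \<Gamma> a) then show ?case using HR1[where \<phi>="Neg (Neg a)" and M="{#}" and \<psi>="a"] by simp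
next
  case (andl a b \<Gamma> c) then show ?case using HL1[where x="And a b" and M="{#a,b#}"] by simp
next
  case (andr \<Gamma> a b) then show ?case using HR2[where \<phi>="And a b" and Ma="{#}" and Mb="{#}"] by simp
next
  case (orl a \<Gamma> c b) then show ?case using HL2[where x="Or a b" and Ma="{#a#}" and Mb="{#b#}"] by simp
next
  case (orr1 \<Gamma> a b) then show ?case using HR1[where \<phi>="Or a b" and M="{#}" and \<psi>="a"] by simp
next
  case (orr2 \<Gamma> b a) then show ?case using HR1[where \<phi>="Or a b" and M="{#}" and \<psi>="b"] by simp
next
  case (norl a b \<Gamma> c) then show ?case using HL1[where x="Neg (Or a b)" and M="{#Neg a, Neg b#}"] by simp
next
  case (norr \<Gamma> a b) then show ?case using HR2[where \<phi>="Neg (Or a b)" and Ma="{#}" and Mb="{#}"] by simp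
next
  case (nandl a \<Gamma> c b) then show ?case using HL2[where x="Neg (And a b)" and Ma="{#Neg a#}" and Mb="{#Neg b#}"] by simp
next
  case (nandr1 \<Gamma> a b) then show ?case using HR1[where \<phi>="Neg (And a b)" and M="{#}" and \<psi>="Neg a"] by simp
next
  case (nandr2 \<Gamma> b a) then show ?case using HR1[where \<phi>="Neg (And a b)" and M="{#}" and \<psi>="Neg b"] by simp
next
  case (impl a b \<Gamma> c) then show ?case using HI by blast
next
  case (impr a \<Gamma> b) then show ?case using HR1[where \<phi>="Imp a b" and M="{#a#}" and \<psi>="b"] by simp
next
  case (nimpl a b \<Gamma> c) then show ?case using HL1[where x="Neg (Imp a b)" and M="{#a, Neg b#}"] by simp
next
  case (nimpr \<Gamma> a b) then show ?case using HR2[where \<phi>="Neg (Imp a b)" and Ma="{#}" and Mb="{#}"] by simp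
next
  case (box \<Gamma> c) then show ?case using HM[OF mrule.m_box, where G=\<Gamma>] by (simp add: boxes_FF)
next
  case (dia_ns \<Gamma> c) then show ?case using HM[OF mrule.m_dia_ns, where G=\<Gamma>] by (simp add: negdias_FF)
next
  case (dia a c \<Gamma>) then show ?case using HM[OF mrule.m_dia, where G=\<Gamma>] by simp
next
  case (box_ns a c \<Gamma>) then show ?case using HM[OF mrule.m_box_ns, where G=\<Gamma>] by simp
next
  case (dia_vee a \<Gamma> c) then show ?case using HM[OF mrule.m_dia_vee, where G=\<Gamma>] by (simp add: negdias_FF)
next
  case (box_ns_vee a \<Gamma> c) then show ?case using HM[OF mrule.m_box_ns_vee, where G=\<Gamma>] by (simp add: boxes_FF)
next
  case (dia_pm a \<Gamma> c) then show ?case using HM[OF mrule.m_dia_pm, where G=\<Gamma>] by (simp add: boxes_FF)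
next
  case (box_ns_pm a \<Gamma> c) then show ?case using HM[OF mrule.m_box_ns_pm, where G=\<Gamma>] by (simp add: negdias_FF)
next
  case (box_bt \<Gamma> c) then show ?case using HM[OF mrule.m_box_bt, where G=\<Gamma>] by (simp add: boxes_FF negdias_FF FF_fBN)
next
  case (dia_ns_bt \<Gamma> c) then show ?case using HM[OF mrule.m_dia_ns_bt, where G=\<Gamma>] by (simp add: boxes_FF negdias_FF FF_fBN)
next
  case (dia_bt a c \<Gamma>) then show ?case using HM[OF mrule.m_dia_bt, where G=\<Gamma>] by simp
next
  case (box_ns_bt a c \<Gamma>) then show ?case using HM[OF mrule.m_box_ns_bt, where G=\<Gamma>] by simp
next
  case (dia_1 a \<Gamma> c) then show ?case using HM[OF mrule.m_dia_1, where G=\<Gamma>] by (simp add: boxes_FF negdias_FF FF_fBN)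
next
  case (box_ns_1 a \<Gamma> c) then show ?case using HM[OF mrule.m_box_ns_1, where G=\<Gamma>] by (simp add: boxes_FF negdias_FF FF_fBN)
next
  case (dia_1bt a \<Gamma> c) then show ?case using HM[OF mrule.m_dia_1bt, where G=\<Gamma>] by (simp add: boxes_FF negdias_FF FF_fBN)
next
  case (box_ns_1bt a \<Gamma> c) then show ?case using HM[OF mrule.m_box_ns_1bt, where G=\<Gamma>] by (simp add: boxes_FF negdias_FF FF_fBN)
qed

lemma der_weak: "der L G \<phi> \<Longrightarrow> der L (G + H) \<phi>"
  using der_dh dh_weak dh_der by blast

lemma der_contr: "der L (add_mset x (add_mset x G)) \<phi> \<Longrightarrow> der L (add_mset x G) \<phi>"
  using der_dh dh_contr dh_der by blast

lemma distinct_mset_set: "(\<forall>x. count G x \<le> 1) \<Longrightarrow> mset_set (set_mset G) = G"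
proof (rule multiset_eqI)
  fix a assume A: "\<forall>x. count G x \<le> 1"
  show "count (mset_set (set_mset G)) a = count G a"
  proof (cases "a \<in># G")
    case True
    then have "count G a = 1" using A[rule_format, of a] by (metis One_nat_def count_eq_zero_iff le_SucE le_zero_eq)
    then show ?thesis using True by simp
  next
    case False then show ?thesis by (simp add: not_in_iff)
  qed
qed

lemma der_remdups: "der L G \<phi> \<Longrightarrow> der L (mset_set (set_mset G)) \<phi>"
proof (induction "size G" arbitrary: G rule: less_induct)
  case less
  show ?case
  proof (cases "\<forall>x. count G x \<le> 1")
    case True
    have "mset_set (set_mset G) = G" using True by (rule distinct_mset_set)
    then show ?thesis using less.prems by simp
  next
    case False
    then obtain x where "count G x \<ge> 2" by (metis not_le Suc_1 Suc_leI)
    then have x1: "x \<in># G" by (simp add: count_inI)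
    have "count (G - {#x#}) x \<ge> 1" using \<open>count G x \<ge> 2\<close> by simp
    then have x2: "x \<in># G - {#x#}" by (metis count_inI not_one_le_zero)
    define G' where "G' = G - {#x#} - {#x#}"
    have "G - {#x#} = add_mset x G'" unfolding G'_def using x2 by (metis insert_DiffM)
    then have G': "G = add_mset x (add_mset x G')" using x1 by (metis insert_DiffM)
    have "der L (add_mset x G') \<phi>" using der_contr less.prems G' by blast
    moreover have "size (add_mset x G') < size G" using G' by simp
    ultimately have "der L (mset_set (set_mset (add_mset x G'))) \<phi>" using less.hyps by blast
    then show ?thesis using G' by simp
  qed
qed

lemma der_sub: "der L G \<phi> \<Longrightarrow> set_mset G \<subseteq> set_mset H \<Longrightarrow> der L H \<phi>"
proof -
  assume d: "der L G \<phi>" and s: "set_mset G \<subseteq> set_mset H"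
  let ?A = "mset_set (set_mset G)"
  have "?A \<subseteq># H" using s
    by (auto simp: subseteq_mset_def count_mset_set' Suc_le_eq)
  then have "H = ?A + (H - ?A)" by simp
  then show ?thesis using der_weak[OF der_remdups[OF d], of "H - ?A"] by metis
qed

definition prov :: "logic \<Rightarrow> fm set \<Rightarrow> fm \<Rightarrow> bool" where
  "prov L X \<phi> \<longleftrightarrow> (\<exists>G. set_mset G \<subseteq> X \<and> der L G \<phi>)"

lemma provI: "der L G \<phi> \<Longrightarrow> set_mset G \<subseteq> X \<Longrightarrow> prov L X \<phi>"
  unfolding prov_def by blast

lemma prov_mono: "prov L X \<phi> \<Longrightarrow> X \<subseteq> Y \<Longrightarrow> prov L Y \<phi>"
  unfolding prov_def by blast

lemma prov_insert: "prov L (insert a X) \<phi> \<Longrightarrow> \<exists>G. set_mset G \<subseteq> X \<and> der L (add_mset a G) \<phi>"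
proof -
  assume "prov L (insert a X) \<phi>"
  then obtain G0 where G0: "set_mset G0 \<subseteq> insert a X" "der L G0 \<phi>" unfolding prov_def by blast
  let ?G = "filter_mset (\<lambda>y. y \<noteq> a) G0"
  have "set_mset G0 \<subseteq> set_mset (add_mset a ?G)" by auto
  then have "der L (add_mset a ?G) \<phi>" using der_sub G0(2) by blast
  moreover have "set_mset ?G \<subseteq> X" using G0(1) by auto
  ultimately show ?thesis by blast
qed

lemma prov_insertI: "der L (add_mset a G) \<phi> \<Longrightarrow> set_mset G \<subseteq> X \<Longrightarrow> prov L (insert a X) \<phi>"
  unfolding prov_def by (rule exI[of _ "add_mset a G"]) auto

lemma prov_two: "prov L X \<phi> \<Longrightarrow> prov L X \<psi> \<Longrightarrow> \<exists>G. set_mset G \<subseteq> X \<and> der L G \<phi> \<and> der L G \<psi>"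
proof -
  assume "prov L X \<phi>" "prov L X \<psi>"
  then obtain G1 G2 where "set_mset G1 \<subseteq> X" "der L G1 \<phi>" "set_mset G2 \<subseteq> X" "der L G2 \<psi>"
    unfolding prov_def by blast
  then show ?thesis using der_weak[of L G1 \<phi> G2] der_weak[of L G2 \<psi> G1]
    by (intro exI[of _ "G1 + G2"]) (auto simp: add.commute)
qed

lemma lindenbaum:
  assumes "\<not> prov L X \<phi>"
  shows "\<exists>Y. X \<subseteq> Y \<and> \<not> prov L Y \<phi> \<and> (\<forall>\<psi>. \<psi> \<notin> Y \<longrightarrow> prov L (insert \<psi> Y) \<phi>)"
proof -
  let ?A = "{Y. X \<subseteq> Y \<and> \<not> prov L Y \<phi>}"
  have "\<exists>M\<in>?A. \<forall>Z\<in>?A. M \<subseteq> Z \<longrightarrow> Z = M"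
  proof (rule subset_Zorn_nonempty)
    show "?A \<noteq> {}" using assms by blast
  next
    fix C assume C: "C \<noteq> {}" "subset.chain ?A C"
    have "X \<subseteq> \<Union>C" using C unfolding subset_chain_def by blast
    moreover have "\<not> prov L (\<Union>C) \<phi>"
    proof
      assume "prov L (\<Union>C) \<phi>"
      then obtain G where G: "set_mset G \<subseteq> \<Union>C" "der L G \<phi>" unfolding prov_def by blast
      obtain B where "B \<in> C" "set_mset G \<subseteq> B"
        using finite_subset_Union_chain[OF _ G(1) C(1) C(2)] by blast
      then have "prov L B \<phi>" using G(2) unfolding prov_def by blast
      moreover have "B \<in> ?A" using \<open>B \<in> C\<close> C(2) by (auto simp: subset_chain_def)
      ultimately show False by blast
    qed
    ultimately show "\<Union>C \<in> ?A" by blast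
  qed
  then obtain M where M: "M \<in> ?A" "\<forall>Z\<in>?A. M \<subseteq> Z \<longrightarrow> Z = M" by blast
  have "\<forall>\<psi>. \<psi> \<notin> M \<longrightarrow> prov L (insert \<psi> M) \<phi>"
  proof (intro allI impI)
    fix \<psi> assume "\<psi> \<notin> M"
    then have "insert \<psi> M \<notin> ?A" using M(2) by blast
    then show "prov L (insert \<psi> M) \<phi>" using M(1) by blast
  qed
  then show ?thesis using M(1) by blast
qed

definition maxav :: "logic \<Rightarrow> fm \<Rightarrow> fm set \<Rightarrow> bool" where
  "maxav L \<phi> Y \<longleftrightarrow> \<not> prov L Y \<phi> \<and> (\<forall>\<psi>. \<psi> \<notin> Y \<longrightarrow> prov L (insert \<psi> Y) \<phi>)"

definition goodY :: "logic \<Rightarrow> fm set \<Rightarrow> bool" where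
  "goodY L Y \<longleftrightarrow> Y = UNIV \<or> (\<exists>\<phi>. maxav L \<phi> Y)"

lemma sat1:
  assumes "goodY L Y" "x \<in> Y" "\<And>G \<phi>. der L (add_mset a G) \<phi> \<Longrightarrow> der L (add_mset x G) \<phi>"
  shows "a \<in> Y"
proof (rule ccontr)
  assume na: "a \<notin> Y"
  then obtain \<phi> where m: "maxav L \<phi> Y" using assms(1) unfolding goodY_def by auto
  then obtain G where "set_mset G \<subseteq> Y" "der L (add_mset a G) \<phi>"
    using na prov_insert unfolding maxav_def by blast
  then have "prov L Y \<phi>" using assms(2,3) by (intro provI[of L "add_mset x G"]) auto
  then show False using m unfolding maxav_def by blast
qed

lemma sat2:
  assumes "goodY L Y" "x \<in> Y" "\<And>G \<phi>. der L (add_mset a G) \<phi> \<Longrightarrow> der L (add_mset b G) \<phi> \<Longrightarrow> der L (add_mset x G) \<phi>"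
  shows "a \<in> Y \<or> b \<in> Y"
proof (rule ccontr)
  assume na: "\<not> (a \<in> Y \<or> b \<in> Y)"
  then obtain \<phi> where m: "maxav L \<phi> Y" using assms(1) unfolding goodY_def by auto
  then obtain G1 G2 where "set_mset G1 \<subseteq> Y" "der L (add_mset a G1) \<phi>" "set_mset G2 \<subseteq> Y" "der L (add_mset b G2) \<phi>"
    using na prov_insert unfolding maxav_def by meson
  moreover have "der L (add_mset a (G1 + G2)) \<phi>" using der_weak[OF \<open>der L (add_mset a G1) \<phi>\<close>, of G2] by simp
  moreover have "der L (add_mset b (G1 + G2)) \<phi>" using der_weak[OF \<open>der L (add_mset b G2) \<phi>\<close>, of G1] by (simp add: add.commute)
  ultimately have "prov L Y \<phi>" using assms(2,3) by (intro provI[of L "add_mset x (G1 + G2)"]) auto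
  then show False using m unfolding maxav_def by blast
qed

lemma add2_weak: "der L (add_mset a G) \<phi> \<Longrightarrow> der L (add_mset a (add_mset b G)) \<phi>"
  using der_weak[of L "add_mset a G" \<phi> "{#b#}"] by (metis add_mset_commute add_mset_add_single)

lemma add2_weak': "der L (add_mset b G) \<phi> \<Longrightarrow> der L (add_mset a (add_mset b G)) \<phi>"
  using der_weak[of L "add_mset b G" \<phi> "{#a#}"] by (metis add_mset_commute add_mset_add_single)

lemma S_nn: "goodY L Y \<Longrightarrow> Neg (Neg a) \<in> Y \<Longrightarrow> a \<in> Y"
  by (rule sat1[where x="Neg (Neg a)"]) (auto intro: der.nnl)
lemma S_and: "goodY L Y \<Longrightarrow> And a b \<in> Y \<Longrightarrow> a \<in> Y \<and> b \<in> Y"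
  by (intro conjI; rule sat1[where x="And a b"]) (auto intro: der.andl add2_weak add2_weak')
lemma S_or: "goodY L Y \<Longrightarrow> Or a b \<in> Y \<Longrightarrow> a \<in> Y \<or> b \<in> Y"
  by (rule sat2[where x="Or a b"]) (auto intro: der.orl)
lemma S_nor: "goodY L Y \<Longrightarrow> Neg (Or a b) \<in> Y \<Longrightarrow> Neg a \<in> Y \<and> Neg b \<in> Y"
  by (intro conjI; rule sat1[where x="Neg (Or a b)"]) (auto intro: der.norl add2_weak add2_weak')
lemma S_nand: "goodY L Y \<Longrightarrow> Neg (And a b) \<in> Y \<Longrightarrow> Neg a \<in> Y \<or> Neg b \<in> Y"
  by (rule sat2[where x="Neg (And a b)"]) (auto intro: der.nandl)
lemma S_nimp: "goodY L Y \<Longrightarrow> Neg (Imp a b) \<in> Y \<Longrightarrow> a \<in> Y \<and> Neg b \<in> Y"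
  by (intro conjI; rule sat1[where x="Neg (Imp a b)"]) (auto intro: der.nimpl add2_weak add2_weak')

lemma S_imp:
  assumes "goodY L Y" "Imp a b \<in> Y" "prov L Y a"
  shows "b \<in> Y"
proof (rule ccontr)
  assume na: "b \<notin> Y"
  then obtain \<phi> where m: "maxav L \<phi> Y" using assms(1) unfolding goodY_def by auto
  then obtain G1 where G1: "set_mset G1 \<subseteq> Y" "der L (add_mset b G1) \<phi>"
    using na prov_insert unfolding maxav_def by blast
  obtain G2 where G2: "set_mset G2 \<subseteq> Y" "der L G2 a" using assms(3) unfolding prov_def by blast
  have "der L (add_mset (Imp a b) (G1 + G2)) a" using der_weak[OF G2(2), of "add_mset (Imp a b) G1"] by (simp add: add_ac)
  moreover have "der L (add_mset b (G1 + G2)) \<phi>" using der_weak[OF G1(2), of G2] by simp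
  ultimately have "der L (add_mset (Imp a b) (G1 + G2)) \<phi>" by (rule der.impl)
  then have "prov L Y \<phi>" using G1 G2 assms(2) by (intro provI[of L "add_mset (Imp a b) (G1 + G2)"]) auto
  then show False using m unfolding maxav_def by blast
qed

lemma P_at: "\<not> prov L X (Atom p) \<Longrightarrow> Atom p \<notin> X"
  using provI[of L "{#Atom p#}" "Atom p" X] der.ax[of L p "{#}"] by auto
lemma P_nat: "\<not> prov L X (Neg (Atom p)) \<Longrightarrow> Neg (Atom p) \<notin> X"
  using provI[of L "{#Neg (Atom p)#}" "Neg (Atom p)" X] der.axn[of L p "{#}"] by auto
lemma P_nn: "\<not> prov L X (Neg (Neg a)) \<Longrightarrow> \<not> prov L X a"
  unfolding prov_def using der.nnr by blast
lemma P_or: "\<not> prov L X (Or a b) \<Longrightarrow> \<not> prov L X a \<and> \<not> prov L X b"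
  unfolding prov_def using der.orr1 der.orr2 by blast
lemma P_nand: "\<not> prov L X (Neg (And a b)) \<Longrightarrow> \<not> prov L X (Neg a) \<and> \<not> prov L X (Neg b)"
  unfolding prov_def using der.nandr1 der.nandr2 by blast
lemma P_and: "\<not> prov L X (And a b) \<Longrightarrow> \<not> prov L X a \<or> \<not> prov L X b"
  using prov_two[of L X a b] der.andr unfolding prov_def by blast
lemma P_nor: "\<not> prov L X (Neg (Or a b)) \<Longrightarrow> \<not> prov L X (Neg a) \<or> \<not> prov L X (Neg b)"
  using prov_two[of L X "Neg a" "Neg b"] der.norr unfolding prov_def by blast
lemma P_nimp: "\<not> prov L X (Neg (Imp a b)) \<Longrightarrow> \<not> prov L X a \<or> \<not> prov L X (Neg b)"
  using prov_two[of L X a "Neg b"] der.nimpr unfolding prov_def by blast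
lemma P_imp: "\<not> prov L X (Imp a b) \<Longrightarrow> \<not> prov L (insert a X) b"
  using prov_insert[of L a X b] der.impr unfolding prov_def by blast

fun clsDp :: "logic \<Rightarrow> nat" where
  "clsDp CN4K = 2" | "clsDp CN4Kpm = 0" | "clsDp CN4Kvee = 1" | "clsDp CN4Kbowtie = 1" | "clsDp CN4K1 = 0"
fun clsBm :: "logic \<Rightarrow> nat" where
  "clsBm CN4K = 1" | "clsBm CN4Kpm = 1" | "clsBm CN4Kvee = 0" | "clsBm CN4Kbowtie = 1" | "clsBm CN4K1 = 0"
fun clsDm :: "logic \<Rightarrow> nat" where
  "clsDm CN4K = 3" | "clsDm CN4Kpm = 1" | "clsDm CN4Kvee = 1" | "clsDm CN4Kbowtie = 0" | "clsDm CN4K1 = 0"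

definition fbc :: "logic \<Rightarrow> nat \<Rightarrow> fm \<Rightarrow> fm multiset" where
  "fbc L i x = (if 0 = i then fB x else {#}) + (if clsDm L = i then fN x else {#})"
definition fdc :: "logic \<Rightarrow> nat \<Rightarrow> fm \<Rightarrow> fm multiset" where
  "fdc L i x = (if clsDp L = i then fD x else {#}) + (if clsBm L = i then fNB x else {#})"
definition BC :: "logic \<Rightarrow> nat \<Rightarrow> fm set \<Rightarrow> fm set" where
  "BC L i Y = {z. \<exists>x\<in>Y. z \<in># fbc L i x}"
definition DC :: "logic \<Rightarrow> nat \<Rightarrow> fm set \<Rightarrow> fm set" where
  "DC L i Y = {z. \<exists>x\<in>Y. z \<in># fdc L i x}"

lemma fbc_Bp: "fbc L 0 = (if L \<in> {CN4Kbowtie, CN4K1} then fBN else fB)"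
  by (cases L) (auto simp: fun_eq_iff fbc_def fBN_def)
lemma fbc_Dm: "fbc L (clsDm L) = (if L \<in> {CN4Kbowtie, CN4K1} then fBN else fN)"
  by (cases L) (auto simp: fun_eq_iff fbc_def fBN_def)
lemma fbc_Dp: "fbc L (clsDp L) = (case L of CN4K \<Rightarrow> f0 | CN4Kpm \<Rightarrow> fB | CN4Kvee \<Rightarrow> fN | CN4Kbowtie \<Rightarrow> f0 | CN4K1 \<Rightarrow> fBN)"
  by (cases L) (auto simp: fun_eq_iff fbc_def fBN_def f0_def)
lemma fbc_Bm: "fbc L (clsBm L) = (case L of CN4K \<Rightarrow> f0 | CN4Kpm \<Rightarrow> fN | CN4Kvee \<Rightarrow> fB | CN4Kbowtie \<Rightarrow> f0 | CN4K1 \<Rightarrow> fBN)"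
  by (cases L) (auto simp: fun_eq_iff fbc_def fBN_def f0_def)
lemma fdc_Dp: "fdc L (clsDp L) = (if L \<in> {CN4Kbowtie, CN4K1} then (\<lambda>x. fD x + fNB x) else fD)"
  by (cases L) (auto simp: fun_eq_iff fdc_def)
lemma fdc_Bm: "fdc L (clsBm L) = (if L \<in> {CN4Kbowtie, CN4K1} then (\<lambda>x. fD x + fNB x) else fNB)"
  by (cases L) (auto simp: fun_eq_iff fdc_def)

lemma fD_mem: "d \<in># fD x \<Longrightarrow> x = Dia d"
  by (cases x rule: fD.cases) auto
lemma fNB_mem: "d \<in># fNB x \<Longrightarrow> \<exists>a. x = Neg (Box a) \<and> d = Neg a"
  by (cases x rule: fNB.cases) auto

lemma lift: "set_mset G \<subseteq> {z. \<exists>x\<in>X. z \<in># f x} \<Longrightarrow> \<exists>D. set_mset D \<subseteq> X \<and> G \<subseteq># FF f D"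
proof (induction G)
  case empty then show ?case by (intro exI[of _ "{#}"]) auto
next
  case (add z G)
  then obtain D where D: "set_mset D \<subseteq> X" "G \<subseteq># FF f D" by auto
  obtain x where x: "x \<in> X" "z \<in># f x" using add.prems by auto
  have "{#z#} \<subseteq># f x" using x(2) by simp
  then have "{#z#} + G \<subseteq># f x + FF f D" using D(2) by (rule subset_mset.add_mono)
  then have "add_mset z G \<subseteq># f x + FF f D" by simp
  then show ?case using D x by (intro exI[of _ "add_mset x D"]) auto
qed

lemma der_sube: "der L G \<phi> \<Longrightarrow> G \<subseteq># H \<Longrightarrow> der L H \<phi>"
  by (metis der_weak subset_mset.add_diff_inverse)

lemma F1: "\<not> prov L X (Box c) \<Longrightarrow> \<not> prov L (BC L 0 X) c"
proof
  assume n: "\<not> prov L X (Box c)" and "prov L (BC L 0 X) c"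
  then obtain G where "set_mset G \<subseteq> BC L 0 X" "der L G c" unfolding prov_def by blast
  then obtain D where D: "set_mset D \<subseteq> X" "G \<subseteq># FF (fbc L 0) D" using lift[of G X "fbc L 0"] unfolding BC_def by blast
  then have d: "der L (FF (fbc L 0) D) c" using der_sube \<open>der L G c\<close> by blast
  have "der L D (Box c)"
  proof (cases "L \<in> {CN4Kbowtie, CN4K1}")
    case True then show ?thesis using d fbc_Bp[of L] der.box_bt[of L D c] by (simp add: boxes_FF negdias_FF FF_fBN)
  next
    case False then show ?thesis using d fbc_Bp[of L] der.box[of L D c] by (cases L) (simp_all add: boxes_FF)
  qed
  then show False using n D(1) provI by blast
qed

lemma F2: "\<not> prov L X (Neg (Dia c)) \<Longrightarrow> \<not> prov L (BC L (clsDm L) X) (Neg c)"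
proof
  assume n: "\<not> prov L X (Neg (Dia c))" and "prov L (BC L (clsDm L) X) (Neg c)"
  then obtain G where "set_mset G \<subseteq> BC L (clsDm L) X" "der L G (Neg c)" unfolding prov_def by blast
  then obtain D where D: "set_mset D \<subseteq> X" "G \<subseteq># FF (fbc L (clsDm L)) D" using lift[of G X "fbc L (clsDm L)"] unfolding BC_def by blast
  then have d: "der L (FF (fbc L (clsDm L)) D) (Neg c)" using der_sube \<open>der L G (Neg c)\<close> by blast
  have "der L D (Neg (Dia c))"
  proof (cases "L \<in> {CN4Kbowtie, CN4K1}")
    case True then show ?thesis using d fbc_Dm[of L] der.dia_ns_bt[of L D c] by (simp add: boxes_FF negdias_FF FF_fBN)
  next
    case False then show ?thesis using d fbc_Dm[of L] der.dia_ns[of L D c] by (cases L) (simp_all add: negdias_FF)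
  qed
  then show False using n D(1) provI by blast
qed

lemma fbc_CN4K: "fbc CN4K 2 = f0" "fbc CN4K 1 = f0"
  by (auto simp: fun_eq_iff fbc_def f0_def)

lemma F3_rule: "d \<in># fdc L (clsDp L) x \<Longrightarrow> der L (add_mset d (FF (fbc L (clsDp L)) D)) e \<Longrightarrow> der L (add_mset x D) (Dia e)"
  unfolding fdc_Dp fbc_Dp
  by (cases L) (auto simp: boxes_FF negdias_FF FF_fBN dest!: fD_mem fNB_mem intro: der.dia der.dia_bt der.dia_pm der.dia_vee der.dia_1 der.dia_1bt)

lemma F4_rule: "d \<in># fdc L (clsBm L) x \<Longrightarrow> der L (add_mset d (FF (fbc L (clsBm L)) D)) (Neg e) \<Longrightarrow> der L (add_mset x D) (Neg (Box e))"
  unfolding fdc_Bm fbc_Bm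
  by (cases L) (auto simp: boxes_FF negdias_FF FF_fBN dest!: fD_mem fNB_mem intro: der.box_ns der.box_ns_bt der.box_ns_pm der.box_ns_vee der.box_ns_1 der.box_ns_1bt)

lemma F34:
  assumes r: "\<And>d x D. d \<in># fdc L i x \<Longrightarrow> der L (add_mset d (FF (fbc L i) D)) e \<Longrightarrow> der L (add_mset x D) \<chi>"
    and n: "\<not> prov L X \<chi>" and dd: "d \<in> DC L i X"
  shows "\<not> prov L (insert d (BC L i X)) e"
proof
  assume "prov L (insert d (BC L i X)) e"
  then obtain G where G: "set_mset G \<subseteq> BC L i X" "der L (add_mset d G) e" using prov_insert by blast
  then obtain D where D: "set_mset D \<subseteq> X" "G \<subseteq># FF (fbc L i) D" using lift[of G X "fbc L i"] unfolding BC_def by blast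
  then have "der L (add_mset d (FF (fbc L i) D)) e" using der_sube[OF G(2), of "add_mset d (FF (fbc L i) D)"] by simp
  moreover obtain x where x: "x \<in> X" "d \<in># fdc L i x" using dd unfolding DC_def by blast
  ultimately have "der L (add_mset x D) \<chi>" using r by blast
  then show False using n D(1) x(1) provI[of L "add_mset x D" \<chi> X] by auto
qed

lemma F3: "\<not> prov L X (Dia e) \<Longrightarrow> d \<in> DC L (clsDp L) X \<Longrightarrow> \<not> prov L (insert d (BC L (clsDp L) X)) e"
  by (rule F34[OF F3_rule])
lemma F4: "\<not> prov L X (Neg (Box e)) \<Longrightarrow> d \<in> DC L (clsBm L) X \<Longrightarrow> \<not> prov L (insert d (BC L (clsBm L) X)) (Neg e)"
  by (rule F34[OF F4_rule])


definition gset :: "(nat \<times> fm) option \<Rightarrow> fm set" where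
  "gset g = (case g of None \<Rightarrow> {} | Some (i, e) \<Rightarrow> {Dia e, Atom i})"
definition enc :: "fm set \<Rightarrow> (nat \<times> fm) option \<Rightarrow> fm set set" where
  "enc Y g = {Box ` Y \<union> gset g}"
definition wY :: "fm set set \<Rightarrow> fm set" where
  "wY S = {a. Box a \<in> \<Union>S}"
definition wg :: "fm set set \<Rightarrow> (nat \<times> fm) option" where
  "wg S = (if (\<exists>e. Dia e \<in> \<Union>S) then Some (SOME i. Atom i \<in> \<Union>S, SOME e. Dia e \<in> \<Union>S) else None)"

lemma wY_enc[simp]: "wY (enc Y g) = Y"
  by (auto simp: wY_def enc_def gset_def split: option.splits)

lemma wg_enc[simp]: "wg (enc Y g) = g"
proof (cases g)
  case None then show ?thesis by (auto simp: wg_def enc_def gset_def)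
next
  case (Some p)
  then obtain i e where p: "g = Some (i, e)" by (cases p) auto
  have u: "\<Union>(enc Y g) = Box ` Y \<union> {Dia e, Atom i}" using p by (simp add: enc_def gset_def)
  have "(SOME j. Atom j \<in> \<Union>(enc Y g)) = i" unfolding u by auto
  moreover have "(SOME f. Dia f \<in> \<Union>(enc Y g)) = e" unfolding u by auto
  ultimately show ?thesis using p u by (auto simp: wg_def)
qed

definition goodg :: "logic \<Rightarrow> fm set \<Rightarrow> (nat \<times> fm) option \<Rightarrow> bool" where
  "goodg L Y g = (case g of None \<Rightarrow> True
     | Some (i, e) \<Rightarrow> (\<forall>d\<in>DC L i Y. \<not> prov L (insert d (BC L i Y)) e))"

definition Wc :: "logic \<Rightarrow> fm set set set" where
  "Wc L = {enc Y g | Y g. goodY L Y \<and> goodg L Y g}"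

definition canR :: "logic \<Rightarrow> nat \<Rightarrow> fm set set \<Rightarrow> fm set set \<Rightarrow> bool" where
  "canR L i u v \<longleftrightarrow> u \<in> Wc L \<and> v \<in> Wc L \<and> BC L i (wY u) \<subseteq> wY v
     \<and> (\<forall>e. wg u = Some (i, e) \<longrightarrow> \<not> prov L (wY v) e)"

definition cle :: "logic \<Rightarrow> fm set set \<Rightarrow> fm set set \<Rightarrow> bool" where
  "cle L u v \<longleftrightarrow> u \<in> Wc L \<and> v \<in> Wc L \<and> wY u \<subseteq> wY v"

definition cm :: "logic \<Rightarrow> fm set set model" where
  "cm L = \<lparr>W = Wc L, le = cle L, RBp = canR L 0, RBm = canR L (clsBm L),
     RDp = canR L (clsDp L), RDm = canR L (clsDm L),
     vp = (\<lambda>p. {u \<in> Wc L. Atom p \<in> wY u}), vm = (\<lambda>p. {u \<in> Wc L. Neg (Atom p) \<in> wY u})\<rparr>"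

lemma cm_simps[simp]: "W (cm L) = Wc L" "le (cm L) = cle L" "RBp (cm L) = canR L 0"
  "RBm (cm L) = canR L (clsBm L)" "RDp (cm L) = canR L (clsDp L)" "RDm (cm L) = canR L (clsDm L)"
  "vp (cm L) p = {u \<in> Wc L. Atom p \<in> wY u}" "vm (cm L) p = {u \<in> Wc L. Neg (Atom p) \<in> wY u}"
  by (simp_all add: cm_def)

lemma Wc_good: "u \<in> Wc L \<Longrightarrow> goodY L (wY u) \<and> goodg L (wY u) (wg u)"
  unfolding Wc_def by auto

lemma Wc_I: "goodY L Y \<Longrightarrow> goodg L Y g \<Longrightarrow> enc Y g \<in> Wc L"
  unfolding Wc_def by auto

lemma goodg_None[simp]: "goodg L Y None"
  by (simp add: goodg_def)

lemma goodY_UNIV[simp]: "goodY L UNIV"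
  by (simp add: goodY_def)

lemma goodY_maxav: "maxav L \<phi> Y \<Longrightarrow> goodY L Y"
  by (auto simp: goodY_def)

lemma lind_world: "\<not> prov L X \<phi> \<Longrightarrow> \<exists>v\<in>Wc L. X \<subseteq> wY v \<and> \<not> prov L (wY v) \<phi>"
proof -
  assume "\<not> prov L X \<phi>"
  then obtain Y where Y: "X \<subseteq> Y" "maxav L \<phi> Y" using lindenbaum unfolding maxav_def by blast
  then have "enc Y None \<in> Wc L" by (intro Wc_I goodY_maxav) auto
  then show ?thesis using Y unfolding maxav_def by (intro bexI[of _ "enc Y None"]) auto
qed

lemma gen_box_A: "cle L u w' \<Longrightarrow> canR L i w' w'' \<Longrightarrow> x \<in> wY u \<Longrightarrow> z \<in># fbc L i x \<Longrightarrow> z \<in> wY w''"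
  unfolding cle_def canR_def BC_def by blast

lemma gen_box_B: "u \<in> Wc L \<Longrightarrow> \<not> prov L (BC L i (wY u)) z \<Longrightarrow>
   \<exists>w'\<in>Wc L. cle L u w' \<and> (\<exists>w''\<in>Wc L. canR L i w' w'' \<and> \<not> prov L (wY w'') z)"
proof -
  assume u: "u \<in> Wc L" and n: "\<not> prov L (BC L i (wY u)) z"
  let ?w = "enc (wY u) None"
  have w: "?w \<in> Wc L" using Wc_good[OF u] by (intro Wc_I) auto
  obtain v where v: "v \<in> Wc L" "BC L i (wY u) \<subseteq> wY v" "\<not> prov L (wY v) z" using lind_world[OF n] by blast
  have "cle L u ?w" using u w by (simp add: cle_def)
  moreover have "canR L i ?w v" using w v by (simp add: canR_def)
  ultimately show ?thesis using w v by blast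
qed

lemma gen_dia_A: "w' \<in> Wc L \<Longrightarrow> x \<in> wY w' \<Longrightarrow> d \<in># fdc L i x \<Longrightarrow> \<exists>w''\<in>Wc L. canR L i w' w'' \<and> d \<in> wY w''"
proof -
  assume w: "w' \<in> Wc L" and x: "x \<in> wY w'" and d: "d \<in># fdc L i x"
  have dD: "d \<in> DC L i (wY w')" using x d unfolding DC_def by blast
  show ?thesis
  proof (cases "\<exists>e. wg w' = Some (i, e)")
    case True
    then obtain e where e: "wg w' = Some (i, e)" by blast
    then have "\<not> prov L (insert d (BC L i (wY w'))) e" using Wc_good[OF w] dD by (auto simp: goodg_def)
    then obtain v where v: "v \<in> Wc L" "insert d (BC L i (wY w')) \<subseteq> wY v" "\<not> prov L (wY v) e"
      using lind_world by blast
    then have "canR L i w' v" using w e by (auto simp: canR_def)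
    then show ?thesis using v by blast
  next
    case False
    let ?v = "enc UNIV None"
    have v: "?v \<in> Wc L" by (intro Wc_I) auto
    then have "canR L i w' ?v" using w False by (auto simp: canR_def)
    then show ?thesis using v by auto
  qed
qed

lemma gen_dia_B: "u \<in> Wc L \<Longrightarrow> (\<forall>d\<in>DC L i (wY u). \<not> prov L (insert d (BC L i (wY u))) z) \<Longrightarrow>
   \<exists>w'\<in>Wc L. cle L u w' \<and> (\<forall>w''. canR L i w' w'' \<longrightarrow> \<not> prov L (wY w'') z)"
proof -
  assume u: "u \<in> Wc L" and g: "\<forall>d\<in>DC L i (wY u). \<not> prov L (insert d (BC L i (wY u))) z"
  let ?w = "enc (wY u) (Some (i, z))"
  have w: "?w \<in> Wc L" using Wc_good[OF u] g by (intro Wc_I) (auto simp: goodg_def)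
  have "cle L u ?w" using u w by (simp add: cle_def)
  moreover have "\<forall>w''. canR L i ?w w'' \<longrightarrow> \<not> prov L (wY w'') z" by (simp add: canR_def)
  ultimately show ?thesis using w by blast
qed

lemma truth: "u \<in> Wc L \<Longrightarrow> (\<psi> \<in> wY u \<longrightarrow> sat (cm L) True u \<psi>) \<and> (\<not> prov L (wY u) \<psi> \<longrightarrow> \<not> sat (cm L) True u \<psi>)
  \<and> (Neg \<psi> \<in> wY u \<longrightarrow> sat (cm L) False u \<psi>) \<and> (\<not> prov L (wY u) (Neg \<psi>) \<longrightarrow> \<not> sat (cm L) False u \<psi>)"
proof (induction \<psi> arbitrary: u)
  case (Atom p)
  then show ?case by (auto dest: P_at P_nat)
next
  case (Neg a)
  have gY: "goodY L (wY u)" using Wc_good[OF Neg.prems] by blast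
  show ?case using Neg.IH[OF Neg.prems] S_nn[OF gY] P_nn by (simp only: sat.simps) blast
next
  case (And a b)
  have gY: "goodY L (wY u)" using Wc_good[OF And.prems] by blast
  have A1: "a \<in> wY u \<Longrightarrow> sat (cm L) True u a" and A2: "\<not> prov L (wY u) a \<Longrightarrow> \<not> sat (cm L) True u a"
    and A3: "Neg a \<in> wY u \<Longrightarrow> sat (cm L) False u a" and A4: "\<not> prov L (wY u) (Neg a) \<Longrightarrow> \<not> sat (cm L) False u a"
    using And.IH(1)[OF And.prems] by blast+
  have B1: "b \<in> wY u \<Longrightarrow> sat (cm L) True u b" and B2: "\<not> prov L (wY u) b \<Longrightarrow> \<not> sat (cm L) True u b"
    and B3: "Neg b \<in> wY u \<Longrightarrow> sat (cm L) False u b" and B4: "\<not> prov L (wY u) (Neg b) \<Longrightarrow> \<not> sat (cm L) False u b"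
    using And.IH(2)[OF And.prems] by blast+
  show ?case
  proof (intro conjI impI)
    assume "And a b \<in> wY u" then have "a \<in> wY u" "b \<in> wY u" using S_and[OF gY] by blast+
    then show "sat (cm L) True u (And a b)" using A1 B1 by simp
  next
    assume "\<not> prov L (wY u) (And a b)" then have "\<not> prov L (wY u) a \<or> \<not> prov L (wY u) b" by (rule P_and)
    then show "\<not> sat (cm L) True u (And a b)" using A2 B2 by auto
  next
    assume "Neg (And a b) \<in> wY u" then have "Neg a \<in> wY u \<or> Neg b \<in> wY u" using S_nand[OF gY] by blast
    then show "sat (cm L) False u (And a b)" using A3 B3 by auto
  next
    assume "\<not> prov L (wY u) (Neg (And a b))" then have "\<not> prov L (wY u) (Neg a) \<and> \<not> prov L (wY u) (Neg b)" by (rule P_nand)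
    then show "\<not> sat (cm L) False u (And a b)" using A4 B4 by auto
  qed
next
  case (Or a b)
  have gY: "goodY L (wY u)" using Wc_good[OF Or.prems] by blast
  have A1: "a \<in> wY u \<Longrightarrow> sat (cm L) True u a" and A2: "\<not> prov L (wY u) a \<Longrightarrow> \<not> sat (cm L) True u a"
    and A3: "Neg a \<in> wY u \<Longrightarrow> sat (cm L) False u a" and A4: "\<not> prov L (wY u) (Neg a) \<Longrightarrow> \<not> sat (cm L) False u a"
    using Or.IH(1)[OF Or.prems] by blast+
  have B1: "b \<in> wY u \<Longrightarrow> sat (cm L) True u b" and B2: "\<not> prov L (wY u) b \<Longrightarrow> \<not> sat (cm L) True u b"
    and B3: "Neg b \<in> wY u \<Longrightarrow> sat (cm L) False u b" and B4: "\<not> prov L (wY u) (Neg b) \<Longrightarrow> \<not> sat (cm L) False u b"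
    using Or.IH(2)[OF Or.prems] by blast+
  show ?case
  proof (intro conjI impI)
    assume "Or a b \<in> wY u" then have "a \<in> wY u \<or> b \<in> wY u" using S_or[OF gY] by blast
    then show "sat (cm L) True u (Or a b)" using A1 B1 by auto
  next
    assume "\<not> prov L (wY u) (Or a b)" then have "\<not> prov L (wY u) a \<and> \<not> prov L (wY u) b" by (rule P_or)
    then show "\<not> sat (cm L) True u (Or a b)" using A2 B2 by auto
  next
    assume "Neg (Or a b) \<in> wY u" then have "Neg a \<in> wY u" "Neg b \<in> wY u" using S_nor[OF gY] by blast+
    then show "sat (cm L) False u (Or a b)" using A3 B3 by simp
  next
    assume "\<not> prov L (wY u) (Neg (Or a b))" then have "\<not> prov L (wY u) (Neg a) \<or> \<not> prov L (wY u) (Neg b)" by (rule P_nor)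
    then show "\<not> sat (cm L) False u (Or a b)" using A4 B4 by auto
  qed
next
  case (Imp a b)
  have gY: "goodY L (wY u)" using Wc_good[OF Imp.prems] by blast
  have 1: "Imp a b \<in> wY u \<longrightarrow> sat (cm L) True u (Imp a b)"
  proof (intro impI, simp, intro ballI impI)
    fix w' assume m: "Imp a b \<in> wY u" and w': "w' \<in> Wc L" "cle L u w'" and sa: "sat (cm L) True w' a"
    have m': "Imp a b \<in> wY w'" using m w' by (auto simp: cle_def)
    have "prov L (wY w') a" using Imp.IH(1)[OF w'(1)] sa by blast
    then have "b \<in> wY w'" using S_imp[OF conjunct1[OF Wc_good[OF w'(1)]] m'] by blast
    then show "sat (cm L) True w' b" using Imp.IH(2)[OF w'(1)] by blast
  qed
  have 2: "\<not> prov L (wY u) (Imp a b) \<longrightarrow> \<not> sat (cm L) True u (Imp a b)"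
  proof
    assume "\<not> prov L (wY u) (Imp a b)"
    then have "\<not> prov L (insert a (wY u)) b" by (rule P_imp)
    then obtain v where v: "v \<in> Wc L" "insert a (wY u) \<subseteq> wY v" "\<not> prov L (wY v) b" using lind_world by blast
    have "cle L u v" using v Imp.prems by (auto simp: cle_def)
    moreover have "sat (cm L) True v a" using Imp.IH(1)[OF v(1)] v(2) by blast
    moreover have "\<not> sat (cm L) True v b" using Imp.IH(2)[OF v(1)] v(3) by blast
    ultimately show "\<not> sat (cm L) True u (Imp a b)" using v(1) by auto
  qed
  have A1: "a \<in> wY u \<Longrightarrow> sat (cm L) True u a" and A2: "\<not> prov L (wY u) a \<Longrightarrow> \<not> sat (cm L) True u a"
    using Imp.IH(1)[OF Imp.prems] by blast+
  have B3: "Neg b \<in> wY u \<Longrightarrow> sat (cm L) False u b" and B4: "\<not> prov L (wY u) (Neg b) \<Longrightarrow> \<not> sat (cm L) False u b"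
    using Imp.IH(2)[OF Imp.prems] by blast+
  have 3: "Neg (Imp a b) \<in> wY u \<longrightarrow> sat (cm L) False u (Imp a b)"
  proof
    assume "Neg (Imp a b) \<in> wY u" then have "a \<in> wY u" "Neg b \<in> wY u" using S_nimp[OF gY] by blast+
    then show "sat (cm L) False u (Imp a b)" using A1 B3 by simp
  qed
  have 4: "\<not> prov L (wY u) (Neg (Imp a b)) \<longrightarrow> \<not> sat (cm L) False u (Imp a b)"
  proof
    assume "\<not> prov L (wY u) (Neg (Imp a b))" then have "\<not> prov L (wY u) a \<or> \<not> prov L (wY u) (Neg b)" by (rule P_nimp)
    then show "\<not> sat (cm L) False u (Imp a b)" using A2 B4 by auto
  qed
  show ?case using 1 2 3 4 by blast
next
  case (Box c)
  have 1: "Box c \<in> wY u \<longrightarrow> sat (cm L) True u (Box c)"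
  proof (intro impI, simp, intro ballI impI)
    fix w' w'' assume m: "Box c \<in> wY u" and "w' \<in> Wc L" "cle L u w'" "w'' \<in> Wc L" "canR L 0 w' w''"
    then have "c \<in> wY w''" using gen_box_A[of L u w' 0 w'' "Box c" c] by (simp add: fbc_def)
    then show "sat (cm L) True w'' c" using Box.IH \<open>w'' \<in> Wc L\<close> by blast
  qed
  have 2: "\<not> prov L (wY u) (Box c) \<longrightarrow> \<not> sat (cm L) True u (Box c)"
  proof
    assume "\<not> prov L (wY u) (Box c)"
    then have "\<not> prov L (BC L 0 (wY u)) c" by (rule F1)
    then obtain w' w'' where w: "w' \<in> Wc L" "cle L u w'" "w'' \<in> Wc L" "canR L 0 w' w''" "\<not> prov L (wY w'') c"
      using gen_box_B[OF Box.prems] by blast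
    then have "\<not> sat (cm L) True w'' c" using Box.IH by blast
    then show "\<not> sat (cm L) True u (Box c)" using w by auto
  qed
  have 3: "Neg (Box c) \<in> wY u \<longrightarrow> sat (cm L) False u (Box c)"
  proof (intro impI, simp, intro ballI impI)
    fix w' assume m: "Neg (Box c) \<in> wY u" and w': "w' \<in> Wc L" "cle L u w'"
    then have "Neg (Box c) \<in> wY w'" by (auto simp: cle_def)
    then obtain w'' where w'': "w'' \<in> Wc L" "canR L (clsBm L) w' w''" "Neg c \<in> wY w''"
      using gen_dia_A[OF w'(1), of "Neg (Box c)" "Neg c" "clsBm L"] by (auto simp: fdc_def)
    then have "sat (cm L) False w'' c" using Box.IH by blast
    then show "\<exists>w''\<in>Wc L. canR L (clsBm L) w' w'' \<and> sat (cm L) False w'' c" using w'' by blast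
  qed
  have 4: "\<not> prov L (wY u) (Neg (Box c)) \<longrightarrow> \<not> sat (cm L) False u (Box c)"
  proof
    assume n: "\<not> prov L (wY u) (Neg (Box c))"
    have "\<forall>d\<in>DC L (clsBm L) (wY u). \<not> prov L (insert d (BC L (clsBm L) (wY u))) (Neg c)"
      using F4[OF n] by blast
    then obtain w' where w': "w' \<in> Wc L" "cle L u w'" "\<forall>w''. canR L (clsBm L) w' w'' \<longrightarrow> \<not> prov L (wY w'') (Neg c)"
      using gen_dia_B[OF Box.prems] by blast
    have "\<forall>w''\<in>Wc L. canR L (clsBm L) w' w'' \<longrightarrow> \<not> sat (cm L) False w'' c" using w'(3) Box.IH by blast
    then show "\<not> sat (cm L) False u (Box c)" using w' by auto
  qed
  show ?case using 1 2 3 4 by blast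
next
  case (Dia c)
  have 1: "Dia c \<in> wY u \<longrightarrow> sat (cm L) True u (Dia c)"
  proof (intro impI, simp, intro ballI impI)
    fix w' assume m: "Dia c \<in> wY u" and w': "w' \<in> Wc L" "cle L u w'"
    then have "Dia c \<in> wY w'" by (auto simp: cle_def)
    then obtain w'' where w'': "w'' \<in> Wc L" "canR L (clsDp L) w' w''" "c \<in> wY w''"
      using gen_dia_A[OF w'(1), of "Dia c" c "clsDp L"] by (auto simp: fdc_def)
    then have "sat (cm L) True w'' c" using Dia.IH by blast
    then show "\<exists>w''\<in>Wc L. canR L (clsDp L) w' w'' \<and> sat (cm L) True w'' c" using w'' by blast
  qed
  have 2: "\<not> prov L (wY u) (Dia c) \<longrightarrow> \<not> sat (cm L) True u (Dia c)"
  proof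
    assume n: "\<not> prov L (wY u) (Dia c)"
    have "\<forall>d\<in>DC L (clsDp L) (wY u). \<not> prov L (insert d (BC L (clsDp L) (wY u))) c"
      using F3[OF n] by blast
    then obtain w' where w': "w' \<in> Wc L" "cle L u w'" "\<forall>w''. canR L (clsDp L) w' w'' \<longrightarrow> \<not> prov L (wY w'') c"
      using gen_dia_B[OF Dia.prems] by blast
    have "\<forall>w''\<in>Wc L. canR L (clsDp L) w' w'' \<longrightarrow> \<not> sat (cm L) True w'' c" using w'(3) Dia.IH by blast
    then show "\<not> sat (cm L) True u (Dia c)" using w' by auto
  qed
  have 3: "Neg (Dia c) \<in> wY u \<longrightarrow> sat (cm L) False u (Dia c)"
  proof (intro impI, simp, intro ballI impI)
    fix w' w'' assume m: "Neg (Dia c) \<in> wY u" and "w' \<in> Wc L" "cle L u w'" "w'' \<in> Wc L" "canR L (clsDm L) w' w''"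
    then have "Neg c \<in> wY w''" using gen_box_A[of L u w' "clsDm L" w'' "Neg (Dia c)" "Neg c"] by (simp add: fbc_def)
    then show "sat (cm L) False w'' c" using Dia.IH \<open>w'' \<in> Wc L\<close> by blast
  qed
  have 4: "\<not> prov L (wY u) (Neg (Dia c)) \<longrightarrow> \<not> sat (cm L) False u (Dia c)"
  proof
    assume "\<not> prov L (wY u) (Neg (Dia c))"
    then have "\<not> prov L (BC L (clsDm L) (wY u)) (Neg c)" by (rule F2)
    then obtain w' w'' where w: "w' \<in> Wc L" "cle L u w'" "w'' \<in> Wc L" "canR L (clsDm L) w' w''" "\<not> prov L (wY w'') (Neg c)"
      using gen_box_B[OF Dia.prems] by blast
    then have "\<not> sat (cm L) False w'' c" using Dia.IH by blast
    then show "\<not> sat (cm L) False u (Dia c)" using w by auto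
  qed
  show ?case using 1 2 3 4 by blast
qed

lemma cm_model: "is_model (cm L)"
proof -
  have ne: "enc UNIV None \<in> Wc L" by (intro Wc_I) auto
  show ?thesis
    unfolding is_model_def is_frame_def
    using ne by (auto simp: cle_def canR_def)
qed

lemma cm_class: "in_class L (cm L)"
  by (cases L) (simp_all add: in_class_def)

lemma conjs_sat: "xs \<noteq> [] \<Longrightarrow> (\<forall>x\<in>set xs. sat M True w x) \<Longrightarrow> sat M True w (conjs xs)"
  by (induction xs rule: conjs.induct) auto

theorem theorem6:
  fixes L :: logic and xs :: "fm list" and \<phi> :: fm
  assumes "valid L (seq_fm xs \<phi>)"
  shows "der L (mset xs) \<phi>"
proof (rule ccontr)
  assume nd: "\<not> der L (mset xs) \<phi>"
  have np: "\<not> prov L (set xs) \<phi>"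
  proof
    assume "prov L (set xs) \<phi>"
    then obtain G where "set_mset G \<subseteq> set xs" "der L G \<phi>" unfolding prov_def by blast
    then have "der L (mset xs) \<phi>" using der_sub[of L G \<phi> "mset xs"] by simp
    then show False using nd by blast
  qed
  obtain v where v: "v \<in> Wc L" "set xs \<subseteq> wY v" "\<not> prov L (wY v) \<phi>" using lind_world[OF np] by blast
  have all: "\<forall>x\<in>set xs. sat (cm L) True v x" using truth[OF v(1)] v(2) by blast
  have nphi: "\<not> sat (cm L) True v \<phi>" using truth[OF v(1)] v(3) by blast
  have "sat (cm L) True v (seq_fm xs \<phi>)"
    using assms cm_model[of L] cm_class[of L] v(1) unfolding valid_def by auto
  show False
  proof (cases "xs = []")
    case True
    then show False using \<open>sat (cm L) True v (seq_fm xs \<phi>)\<close> nphi by (simp add: seq_fm_def)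
  next
    case False
    then have "sat (cm L) True v (Imp (conjs xs) \<phi>)" using \<open>sat (cm L) True v (seq_fm xs \<phi>)\<close> by (simp add: seq_fm_def)
    moreover have "cle L v v" using v(1) by (simp add: cle_def)
    moreover have "sat (cm L) True v (conjs xs)" using conjs_sat[OF False all] .
    ultimately show False using nphi v(1) by auto
  qed
qed

end
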